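(* Let $R$ be a commutative Noetherian ring, $\alpha$ an automorphism of $R$, and suppose $S=R[\theta;\alpha]$ is a prime ring. Then: (a) $R$ is $\alpha$-prime, and there exist $n\in\mathbb N$ and a prime ideal $Q$ of $R$ such that $\{Q,\alpha(Q),\ldots,\alpha^{n-1}(Q)\}$ is the set of minimal primes of $R$ (with $\alpha^n(Q)=Q$) and $\bigcap_{i=0}^{n-1}\alpha^i(Q)=(0)$. (b) With $Q,n$ as in (a), if $S$ is primitive then $(R/Q)[\theta^n;\alpha^n]$ is primitive (where $\alpha^n$ denotes the induced automorphism of $R/Q$).
   Context: $R[\theta;\alpha]$: skew polynomial ring with $\theta r=\alpha(r)\theta$. An ideal $P$ of $R$ with $\alpha(P)=P$ is $\alpha$-prime if for all $\alpha$-stable ideals $I,J$, $IJ\subseteq P$ implies $I\subseteq P$ or $J\subseteq P$; $R$ is $\alpha$-prime if $(0)$ is $\alpha$-prime. A ring is primitive if it has a faithful simple right module. *)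

theory Defs
  imports "HOL-Algebra.Ring_Divisibility" "HOL-Algebra.Ideal_Product" "HOL-Algebra.QuotRing"
begin

text \<open>Skew polynomial ring R[theta; alpha] with theta r = alpha(r) theta.
  Elements are finitely supported coefficient sequences f, standing for
  sum_i f(i) theta^i (coefficients on the left).  Hence
  (a theta^i)(b theta^j) = a alpha^i(b) theta^(i+j).\<close>

definition skew_poly :: "('a, 'b) ring_scheme \<Rightarrow> ('a \<Rightarrow> 'a) \<Rightarrow> (nat \<Rightarrow> 'a) ring" where
  "skew_poly R \<alpha> =
     \<lparr> carrier = {f. (\<forall>i. f i \<in> carrier R) \<and> finite {i. f i \<noteq> \<zero>\<^bsub>R\<^esub>}},
       mult = (\<lambda>f g k. \<Oplus>\<^bsub>R\<^esub> i \<in> {..k}. f i \<otimes>\<^bsub>R\<^esub> (\<alpha> ^^ i) (g (k - i))),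
       one = (\<lambda>k. if k = 0 then \<one>\<^bsub>R\<^esub> else \<zero>\<^bsub>R\<^esub>),
       zero = (\<lambda>k. \<zero>\<^bsub>R\<^esub>),
       add = (\<lambda>f g k. f k \<oplus>\<^bsub>R\<^esub> g k) \<rparr>"

definition alpha_prime_ideal :: "('a, 'b) ring_scheme \<Rightarrow> ('a \<Rightarrow> 'a) \<Rightarrow> 'a set \<Rightarrow> bool" where
  "alpha_prime_ideal R \<alpha> P \<longleftrightarrow>
     ideal P R \<and> \<alpha> ` P = P \<and>
     (\<forall>I J. ideal I R \<and> ideal J R \<and> \<alpha> ` I = I \<and> \<alpha> ` J = J \<and> ideal_prod R I J \<subseteq> P
        \<longrightarrow> I \<subseteq> P \<or> J \<subseteq> P)"

definition alpha_prime_ring :: "('a, 'b) ring_scheme \<Rightarrow> ('a \<Rightarrow> 'a) \<Rightarrow> bool" where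
  "alpha_prime_ring R \<alpha> \<longleftrightarrow> alpha_prime_ideal R \<alpha> {\<zero>\<^bsub>R\<^esub>}"

definition prime_ring :: "('a, 'b) ring_scheme \<Rightarrow> bool" where
  "prime_ring S \<longleftrightarrow> ring S \<and> carrier S \<noteq> {\<zero>\<^bsub>S\<^esub>} \<and>
     (\<forall>I J. ideal I S \<and> ideal J S \<and> ideal_prod S I J \<subseteq> {\<zero>\<^bsub>S\<^esub>}
        \<longrightarrow> I \<subseteq> {\<zero>\<^bsub>S\<^esub>} \<or> J \<subseteq> {\<zero>\<^bsub>S\<^esub>})"

definition minimal_prime :: "('a, 'b) ring_scheme \<Rightarrow> 'a set \<Rightarrow> bool" where
  "minimal_prime R P \<longleftrightarrow> primeideal P R \<and> (\<forall>P'. primeideal P' R \<and> P' \<subseteq> P \<longrightarrow> P' = P)"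

definition right_module ::
  "('c, 'b) ring_scheme \<Rightarrow> 'm set \<Rightarrow> ('m \<Rightarrow> 'm \<Rightarrow> 'm) \<Rightarrow> 'm \<Rightarrow> ('m \<Rightarrow> 'c \<Rightarrow> 'm) \<Rightarrow> bool" where
  "right_module T M madd mzero act \<longleftrightarrow>
     ring T \<and> comm_group \<lparr> carrier = M, mult = madd, one = mzero \<rparr> \<and>
     (\<forall>m\<in>M. \<forall>r\<in>carrier T. act m r \<in> M) \<and>
     (\<forall>m\<in>M. \<forall>r\<in>carrier T. \<forall>s\<in>carrier T. act m (r \<oplus>\<^bsub>T\<^esub> s) = madd (act m r) (act m s)) \<and>
     (\<forall>m\<in>M. \<forall>m'\<in>M. \<forall>r\<in>carrier T. act (madd m m') r = madd (act m r) (act m' r)) \<and>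
     (\<forall>m\<in>M. \<forall>r\<in>carrier T. \<forall>s\<in>carrier T. act m (r \<otimes>\<^bsub>T\<^esub> s) = act (act m r) s) \<and>
     (\<forall>m\<in>M. act m \<one>\<^bsub>T\<^esub> = m)"

definition submodule ::
  "('c, 'b) ring_scheme \<Rightarrow> 'm set \<Rightarrow> 'm set \<Rightarrow> ('m \<Rightarrow> 'm \<Rightarrow> 'm) \<Rightarrow> 'm \<Rightarrow> ('m \<Rightarrow> 'c \<Rightarrow> 'm) \<Rightarrow> bool" where
  "submodule T N M madd mzero act \<longleftrightarrow>
     subgroup N \<lparr> carrier = M, mult = madd, one = mzero \<rparr> \<and>
     (\<forall>m\<in>N. \<forall>r\<in>carrier T. act m r \<in> N)"

definition simple_right_module ::
  "('c, 'b) ring_scheme \<Rightarrow> 'm set \<Rightarrow> ('m \<Rightarrow> 'm \<Rightarrow> 'm) \<Rightarrow> 'm \<Rightarrow> ('m \<Rightarrow> 'c \<Rightarrow> 'm) \<Rightarrow> bool" where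
  "simple_right_module T M madd mzero act \<longleftrightarrow>
     right_module T M madd mzero act \<and> M \<noteq> {mzero} \<and>
     (\<forall>N. submodule T N M madd mzero act \<longrightarrow> N = {mzero} \<or> N = M)"

definition faithful_right_module ::
  "('c, 'b) ring_scheme \<Rightarrow> 'm set \<Rightarrow> ('m \<Rightarrow> 'm \<Rightarrow> 'm) \<Rightarrow> 'm \<Rightarrow> ('m \<Rightarrow> 'c \<Rightarrow> 'm) \<Rightarrow> bool" where
  "faithful_right_module T M madd mzero act \<longleftrightarrow>
     right_module T M madd mzero act \<and>
     (\<forall>r\<in>carrier T. (\<forall>m\<in>M. act m r = mzero) \<longrightarrow> r = \<zero>\<^bsub>T\<^esub>)"

text \<open>Since a simple module is cyclic, hence a quotient of T, it is isomorphic to a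
  module whose elements are subsets of the carrier type of T; so it is no loss of
  generality to take module elements of type 'c set.\<close>

definition primitive :: "('c, 'b) ring_scheme \<Rightarrow> bool" where
  "primitive T \<longleftrightarrow>
     (\<exists>(M :: 'c set set) madd mzero act.
        simple_right_module T M madd mzero act \<and> faithful_right_module T M madd mzero act)"

end

theory Submission
  imports Defs
begin

lemma iso_pow:
  assumes "ring R" "\<alpha> \<in> ring_iso R R"
  shows "\<alpha> ^^ i \<in> ring_iso R R"
proof (induction i)
  case 0
  then show ?case using id_ring_hom[of R] by (simp add: ring_iso_def bij_betw_def id_def)
next
  case (Suc i)
  have h: "\<alpha> ^^ Suc i = \<alpha> \<circ> (\<alpha> ^^ i)" by simp
  have a1: "\<alpha> ^^ i \<in> ring_hom R R" "bij_betw (\<alpha> ^^ i) (carrier R) (carrier R)"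
    using Suc unfolding ring_iso_def by auto
  have a2: "\<alpha> \<in> ring_hom R R" "bij_betw \<alpha> (carrier R) (carrier R)"
    using assms(2) unfolding ring_iso_def by auto
  have "\<alpha> \<circ> (\<alpha> ^^ i) \<in> ring_hom R R" using ring_hom_trans[OF a1(1) a2(1)] .
  moreover have "bij_betw (\<alpha> \<circ> (\<alpha> ^^ i)) (carrier R) (carrier R)"
    using bij_betw_trans[OF a1(2) a2(2)] .
  ultimately show ?case unfolding h ring_iso_def by (simp only: mem_Collect_eq)
qed

context cring begin
lemma finsum_ideal:
  assumes I: "ideal I R" and f: "\<And>i. i \<in> A \<Longrightarrow> f i \<in> I"
  shows "finsum R f A \<in> I"
  using f
proof (induction A rule: infinite_finite_induct)
  case (infinite A)
  have "finsum R f A = \<zero>" using infinite(1) by (rule finsum_infinite)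
  then show ?case using additive_subgroup.zero_closed[OF ideal.axioms(1)[OF I]] by simp
next
  case empty then show ?case using additive_subgroup.zero_closed[OF ideal.axioms(1)[OF I]] by simp
next
  case (insert x F)
  have sub: "I \<subseteq> carrier R" using I ideal.axioms(1) additive_subgroup.a_subset by blast
  have fx: "f x \<in> I" using insert.prems by blast
  have fF: "finsum R f F \<in> I" using insert.IH insert.prems by blast
  have "f \<in> F \<rightarrow> carrier R" using insert.prems sub by blast
  then have "finsum R f (insert x F) = f x \<oplus> finsum R f F"
    using insert.hyps fx sub by (intro finsum_insert) auto
  then show ?case using fx fF additive_subgroup.a_closed[OF ideal.axioms(1)[OF I]] by simp
qed
end

locale skewctx = cring R for R (structure) +
  fixes \<alpha> :: "'a \<Rightarrow> 'a"
  assumes iso: "\<alpha> \<in> ring_iso R R"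
  assumes Sring: "ring (skew_poly R \<alpha>)"
begin

abbreviation S where "S \<equiv> skew_poly R \<alpha>"

lemma pow_iso: "\<alpha> ^^ i \<in> ring_iso R R" using iso_pow[OF ring_axioms iso] .
lemma pow_hom: "\<alpha> ^^ i \<in> ring_hom R R" using pow_iso[of i] unfolding ring_iso_def by blast
lemma pow_bij: "bij_betw (\<alpha> ^^ i) (carrier R) (carrier R)" using pow_iso[of i] unfolding ring_iso_def by blast
lemma pow_closed[simp]: "x \<in> carrier R \<Longrightarrow> (\<alpha> ^^ i) x \<in> carrier R"
  by (rule ring_hom_closed[OF pow_hom])
lemma pow_mult[simp]: "x \<in> carrier R \<Longrightarrow> y \<in> carrier R \<Longrightarrow> (\<alpha> ^^ i) (x \<otimes> y) = (\<alpha> ^^ i) x \<otimes> (\<alpha> ^^ i) y"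
  by (rule ring_hom_mult[OF pow_hom])
lemma pow_add[simp]: "x \<in> carrier R \<Longrightarrow> y \<in> carrier R \<Longrightarrow> (\<alpha> ^^ i) (x \<oplus> y) = (\<alpha> ^^ i) x \<oplus> (\<alpha> ^^ i) y"
  by (rule ring_hom_add[OF pow_hom])
lemma pow_one[simp]: "(\<alpha> ^^ i) \<one> = \<one>"
  by (rule ring_hom_one[OF pow_hom])
lemma pow_zero[simp]: "(\<alpha> ^^ i) \<zero> = \<zero>"
proof -
  interpret h: ring_hom_ring R R "\<alpha> ^^ i" by (rule ring_hom_ringI2[OF ring_axioms ring_axioms pow_hom])
  show ?thesis by simp
qed
lemma pow_inj: "inj_on (\<alpha> ^^ i) (carrier R)" using pow_bij[of i] by (simp add: bij_betw_def)
lemma pow_img: "(\<alpha> ^^ i) ` carrier R = carrier R" using pow_bij[of i] by (simp add: bij_betw_def)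
lemma pow_minus[simp]: "x \<in> carrier R \<Longrightarrow> (\<alpha> ^^ i) (\<ominus> x) = \<ominus> (\<alpha> ^^ i) x"
proof -
  interpret h: ring_hom_ring R R "\<alpha> ^^ i" by (rule ring_hom_ringI2[OF ring_axioms ring_axioms pow_hom])
  show "x \<in> carrier R \<Longrightarrow> ?thesis" by simp
qed

lemma S_carrier: "f \<in> carrier S \<longleftrightarrow> (\<forall>i. f i \<in> carrier R) \<and> finite {i. f i \<noteq> \<zero>}"
  by (simp add: skew_poly_def)
lemma S_mult: "(f \<otimes>\<^bsub>S\<^esub> g) k = (\<Oplus>i \<in> {..k}. f i \<otimes> (\<alpha> ^^ i) (g (k - i)))"
  by (simp add: skew_poly_def)
lemma S_add: "(f \<oplus>\<^bsub>S\<^esub> g) k = f k \<oplus> g k"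
  by (simp add: skew_poly_def)
lemma S_zero: "\<zero>\<^bsub>S\<^esub> = (\<lambda>k. \<zero>)"
  by (simp add: skew_poly_def)
lemma S_one: "\<one>\<^bsub>S\<^esub> = (\<lambda>k. if k = 0 then \<one> else \<zero>)"
  by (simp add: skew_poly_def)

lemma S_coeff: "f \<in> carrier S \<Longrightarrow> f i \<in> carrier R" by (simp add: S_carrier)

lemma S_minus: assumes "f \<in> carrier S" shows "\<ominus>\<^bsub>S\<^esub> f = (\<lambda>k. \<ominus> f k)"
proof -
  interpret SR: ring S by (rule Sring)
  have g: "(\<lambda>k. \<ominus> f k) \<in> carrier S"
  proof -
    have "{i. \<ominus> f i \<noteq> \<zero>} \<subseteq> {i. f i \<noteq> \<zero>}" using assms
      by (auto simp: S_carrier)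
    then show ?thesis using assms by (auto simp: S_carrier intro: finite_subset)
  qed
  have "(\<lambda>k. \<ominus> f k) \<oplus>\<^bsub>S\<^esub> f = \<zero>\<^bsub>S\<^esub>"
    using assms by (auto simp: S_add S_zero S_carrier l_neg)
  then show ?thesis using SR.minus_equality g assms by blast
qed

definition cst :: "'a \<Rightarrow> nat \<Rightarrow> 'a" where "cst r = (\<lambda>k. if k = 0 then r else \<zero>)"

lemma cst_carrier: "r \<in> carrier R \<Longrightarrow> cst r \<in> carrier S"
proof -
  assume r: "r \<in> carrier R"
  have "{i. cst r i \<noteq> \<zero>} \<subseteq> {0}" by (auto simp: cst_def)
  then show ?thesis using r by (auto simp: S_carrier cst_def intro: finite_subset)
qed

lemma cst_lmult:
  assumes a: "a \<in> carrier R" and g: "\<And>i. g i \<in> carrier R"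
  shows "(cst a \<otimes>\<^bsub>S\<^esub> g) k = a \<otimes> g k"
proof -
  have "(cst a \<otimes>\<^bsub>S\<^esub> g) k = (\<Oplus>i \<in> {..k}. if 0 = i then a \<otimes> g k else \<zero>)"
    unfolding S_mult
    by (rule finsum_cong') (auto simp: cst_def a g)
  also have "\<dots> = a \<otimes> g k"
    using finsum_singleton[of 0 "{..k}" "\<lambda>i. a \<otimes> g k"] a g by auto
  finally show ?thesis .
qed

lemma cst_rmult:
  assumes a: "a \<in> carrier R" and g: "\<And>i. g i \<in> carrier R"
  shows "(g \<otimes>\<^bsub>S\<^esub> cst a) k = g k \<otimes> (\<alpha> ^^ k) a"
proof -
  have P: "(\<lambda>i. if k = i then g i \<otimes> (\<alpha> ^^ i) a else \<zero>) \<in> {..k} \<rightarrow> carrier R"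
    using a g by simp
  have E: "g i \<otimes> (\<alpha> ^^ i) (cst a (k - i)) = (if k = i then g i \<otimes> (\<alpha> ^^ i) a else \<zero>)"
    if i: "i \<in> {..k}" for i
  proof (cases "i = k")
    case True then show ?thesis by (simp add: cst_def)
  next
    case False then have "k - i \<noteq> 0" using i by auto
    then show ?thesis using False g by (simp add: cst_def)
  qed
  have "(g \<otimes>\<^bsub>S\<^esub> cst a) k = (\<Oplus>i \<in> {..k}. if k = i then g i \<otimes> (\<alpha> ^^ i) a else \<zero>)"
    unfolding S_mult by (rule finsum_cong'[OF refl P E])
  also have "\<dots> = g k \<otimes> (\<alpha> ^^ k) a"
    by (rule finsum_singleton[of k "{..k}" "\<lambda>i. g i \<otimes> (\<alpha> ^^ i) a"]) (use a g in auto)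
  finally show ?thesis .
qed

end

context skewctx begin

lemma stable_pow: assumes "\<alpha> ` I = I" "x \<in> I" shows "(\<alpha> ^^ i) x \<in> I"
  using assms(2) by (induction i) (use assms(1) in auto)

definition ext :: "'a set \<Rightarrow> (nat \<Rightarrow> 'a) set" where
  "ext I = {f \<in> carrier S. \<forall>i. f i \<in> I}"

lemma ext_ideal:
  assumes I: "ideal I R" and st: "\<alpha> ` I = I"
  shows "ideal (ext I) S"
proof -
  interpret SR: ring S by (rule Sring)
  interpret I: ideal I R by (rule I)
  have sub: "I \<subseteq> carrier R" by (rule I.a_subset)
  show ?thesis
  proof (rule idealI[OF Sring])
    show "subgroup (ext I) (add_monoid S)"
    proof
      show "ext I \<subseteq> carrier (add_monoid S)" by (auto simp: ext_def)
      show "\<one>\<^bsub>add_monoid S\<^esub> \<in> ext I"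
        using SR.zero_closed by (auto simp: ext_def S_zero I.zero_closed)
      fix x y assume x: "x \<in> ext I" and y: "y \<in> ext I"
      show "x \<otimes>\<^bsub>add_monoid S\<^esub> y \<in> ext I"
        using x y SR.add.m_closed by (auto simp: ext_def S_add I.a_closed)
    next
      fix x assume x: "x \<in> ext I"
      have "\<ominus>\<^bsub>S\<^esub> x \<in> ext I"
        using x SR.a_inv_closed by (auto simp: ext_def S_minus I.a_inv_closed)
      then show "inv\<^bsub>add_monoid S\<^esub> x \<in> ext I" by (simp add: a_inv_def)
    qed
  next
    fix a x assume a: "a \<in> ext I" and x: "x \<in> carrier S"
    have ac: "a \<in> carrier S" using a by (simp add: ext_def)
    have "(x \<otimes>\<^bsub>S\<^esub> a) k \<in> I" for k
      unfolding S_mult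
    proof (rule finsum_ideal[OF I])
      fix i assume "i \<in> {..k}"
      have "a (k - i) \<in> I" using a by (simp add: ext_def)
      then have "(\<alpha> ^^ i) (a (k - i)) \<in> I" by (rule stable_pow[OF st])
      then show "x i \<otimes> (\<alpha> ^^ i) (a (k - i)) \<in> I"
        using x by (simp add: S_coeff I.I_l_closed)
    qed
    then show "x \<otimes>\<^bsub>S\<^esub> a \<in> ext I" using SR.m_closed[OF x ac] by (simp add: ext_def)
  next
    fix a x assume a: "a \<in> ext I" and x: "x \<in> carrier S"
    have ac: "a \<in> carrier S" using a by (simp add: ext_def)
    have "(a \<otimes>\<^bsub>S\<^esub> x) k \<in> I" for k
      unfolding S_mult
    proof (rule finsum_ideal[OF I])
      fix i assume "i \<in> {..k}"
      have "a i \<in> I" using a by (simp add: ext_def)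
      then show "a i \<otimes> (\<alpha> ^^ i) (x (k - i)) \<in> I"
        using x by (simp add: S_coeff I.I_r_closed)
    qed
    then show "a \<otimes>\<^bsub>S\<^esub> x \<in> ext I" using SR.m_closed[OF ac x] by (simp add: ext_def)
  qed
qed

lemma cst_ext: "x \<in> I \<Longrightarrow> ideal I R \<Longrightarrow> cst x \<in> ext I"
  using cst_carrier[of x] ideal.Icarr[of I R x] additive_subgroup.zero_closed[OF ideal.axioms(1), of I R]
  by (auto simp: ext_def cst_def)

lemma ext_zero: "ideal I R \<Longrightarrow> ext I \<subseteq> {\<zero>\<^bsub>S\<^esub>} \<Longrightarrow> I \<subseteq> {\<zero>}"
proof
  fix x assume I: "ideal I R" and e: "ext I \<subseteq> {\<zero>\<^bsub>S\<^esub>}" and x: "x \<in> I"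
  have "cst x = \<zero>\<^bsub>S\<^esub>" using cst_ext[OF x I] e by blast
  then have "cst x 0 = \<zero>" by (simp add: S_zero)
  then show "x \<in> {\<zero>}" by (simp add: cst_def)
qed

lemma alpha_prime:
  assumes P: "prime_ring S"
  shows "alpha_prime_ring R \<alpha>"
  unfolding alpha_prime_ring_def alpha_prime_ideal_def
proof (intro conjI allI impI)
  interpret SR: ring S by (rule Sring)
  show "ideal {\<zero>} R" by (rule zeroideal)
  have "\<alpha> \<zero> = \<zero>" using pow_zero[of 1] by simp
  then show "\<alpha> ` {\<zero>} = {\<zero>}" by simp
  fix I J assume H: "ideal I R \<and> ideal J R \<and> \<alpha> ` I = I \<and> \<alpha> ` J = J \<and> ideal_prod R I J \<subseteq> {\<zero>}"
  then have I: "ideal I R" and J: "ideal J R" and sI: "\<alpha> ` I = I" and sJ: "\<alpha> ` J = J"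
    and IJ: "ideal_prod R I J \<subseteq> {\<zero>}" by auto
  have "s = \<zero>\<^bsub>S\<^esub>" if "s \<in> ideal_prod S (ext I) (ext J)" for s
    using that
  proof (induction s rule: ideal_prod.induct)
    case (prod f g)
    have fc: "f \<in> carrier S" and gc: "g \<in> carrier S" using prod by (auto simp: ext_def)
    have "(f \<otimes>\<^bsub>S\<^esub> g) k = \<zero>" for k
    proof -
      have "(f \<otimes>\<^bsub>S\<^esub> g) k = (\<Oplus>i \<in> {..k}. \<zero>)"
        unfolding S_mult
      proof (rule finsum_cong'[OF refl])
        show "(\<lambda>i. \<zero>) \<in> {..k} \<rightarrow> carrier R" by simp
        fix i assume "i \<in> {..k}"
        have a: "f i \<in> I" using prod(1) by (simp add: ext_def)
        have "g (k - i) \<in> J" using prod(2) by (simp add: ext_def)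
        then have b: "(\<alpha> ^^ i) (g (k - i)) \<in> J" by (rule stable_pow[OF sJ])
        have "f i \<otimes> (\<alpha> ^^ i) (g (k - i)) \<in> ideal_prod R I J"
          by (rule ideal_prod.prod[OF a b])
        then show "f i \<otimes> (\<alpha> ^^ i) (g (k - i)) = \<zero>" using IJ by blast
      qed
      then show ?thesis by simp
    qed
    then show ?case by (simp add: S_zero)
  next
    case (sum s1 s2)
    then show ?case using SR.l_zero[OF SR.zero_closed] by simp
  qed
  then have "ideal_prod S (ext I) (ext J) \<subseteq> {\<zero>\<^bsub>S\<^esub>}" by blast
  then have "ext I \<subseteq> {\<zero>\<^bsub>S\<^esub>} \<or> ext J \<subseteq> {\<zero>\<^bsub>S\<^esub>}"
    using P ext_ideal[OF I sI] ext_ideal[OF J sJ] unfolding prime_ring_def by blast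
  then show "I \<subseteq> {\<zero>} \<or> J \<subseteq> {\<zero>}" using ext_zero[OF I] ext_zero[OF J] by blast
qed

end

context cring begin

lemma mem_sum_pidl: "x \<in> set_add R I (PIdl a) \<longleftrightarrow> (\<exists>m\<in>I. \<exists>r\<in>carrier R. x = m \<oplus> r \<otimes> a)"
  by (auto simp: set_add_def' cgenideal_def)

lemma foldr_append_mult:
  assumes "set ys \<subseteq> carrier R" "set zs \<subseteq> carrier R"
  shows "foldr (\<otimes>) (ys @ zs) \<one> = foldr (\<otimes>) ys \<one> \<otimes> foldr (\<otimes>) zs \<one>"
  using assms(1)
proof (induction ys)
  case Nil
  have "foldr (\<otimes>) zs \<one> \<in> carrier R" using assms(2) by (induction zs) auto
  then show ?case by simp
next
  case (Cons y ys)
  have "foldr (\<otimes>) zs \<one> \<in> carrier R" using assms(2) by (induction zs) auto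
  moreover have "foldr (\<otimes>) ys \<one> \<in> carrier R" using Cons.prems by (induction ys) auto
  ultimately show ?case using Cons by (simp add: m_assoc)
qed

lemma foldr_closed: "set ys \<subseteq> carrier R \<Longrightarrow> foldr (\<otimes>) ys \<one> \<in> carrier R"
  by (induction ys) auto

end

locale cnoeth = cring R + noetherian_ring R for R (structure)
begin

lemma max_principle:
  assumes ne: "\<SS> \<noteq> {}" and sub: "\<SS> \<subseteq> {I. ideal I R}"
  shows "\<exists>M\<in>\<SS>. \<forall>X\<in>\<SS>. M \<subseteq> X \<longrightarrow> X = M"
proof (rule subset_Zorn_nonempty[OF ne])
  fix C assume C: "C \<noteq> {}" "subset.chain \<SS> C"
  have "subset.chain {I. ideal I R} C" using C(2) sub unfolding pred_on.chain_def by blast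
  then have "\<Union>C \<in> C" using ideal_chain_is_trivial C(1) by blast
  then show "\<Union>C \<in> \<SS>" using C(2) unfolding pred_on.chain_def by blast
qed

definition PF :: "'a set \<Rightarrow> 'a set set \<Rightarrow> nat \<Rightarrow> bool" where
  "PF I F k \<longleftrightarrow> finite F \<and> (\<forall>P\<in>F. primeideal P R \<and> I \<subseteq> P) \<and>
     (\<forall>P. primeideal P R \<and> I \<subseteq> P \<longrightarrow> (\<exists>P'\<in>F. P' \<subseteq> P)) \<and>
     (\<forall>xs. length xs = k \<longrightarrow> set xs \<subseteq> carrier R \<longrightarrow> (\<forall>x\<in>set xs. \<forall>P\<in>F. x \<in> P) \<longrightarrow>
        foldr (\<otimes>) xs \<one> \<in> I)"

lemma PF_exists:
  assumes I: "ideal I R"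
  shows "\<exists>F k. PF I F k"
proof (rule ccontr)
  assume nI: "\<not> (\<exists>F k. PF I F k)"
  define \<SS> where "\<SS> = {I. ideal I R \<and> \<not> (\<exists>F k. PF I F k)}"
  have "\<SS> \<noteq> {}" using I nI unfolding \<SS>_def by blast
  then obtain M where M: "M \<in> \<SS>" and Mmax: "\<And>X. X \<in> \<SS> \<Longrightarrow> M \<subseteq> X \<Longrightarrow> X = M"
    using max_principle[of \<SS>] unfolding \<SS>_def by blast
  have Mi: "ideal M R" and nM: "\<not> (\<exists>F k. PF M F k)" using M unfolding \<SS>_def by auto
  interpret Mi: ideal M R by (rule Mi)
  have good: "\<exists>F k. PF J F k" if "ideal J R" "M \<subseteq> J" "J \<noteq> M" for J
  proof (rule ccontr)
    assume "\<not> (\<exists>F k. PF J F k)"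
    then have "J \<in> \<SS>" using that(1) unfolding \<SS>_def by simp
    then show False using Mmax[of J] that(2,3) by simp
  qed
  show False
  proof (cases "M = carrier R")
    case True
    have "PF M {} 0"
      unfolding PF_def
    proof (intro conjI allI impI ballI)
      fix P assume P: "primeideal P R \<and> M \<subseteq> P"
      then have PI: "ideal P R" by (simp add: primeideal_def)
      have "P \<subseteq> carrier R" using ideal.Icarr[OF PI] by blast
      then have "carrier R = P" using P True by blast
      then show "\<exists>P'\<in>{}. P' \<subseteq> P" using P primeideal.I_notcarr[of P R] by blast
    next
      fix xs :: "'a list" assume "length xs = 0"
      then show "foldr (\<otimes>) xs \<one> \<in> M" using True by simp
    qed auto
    then show False using nM by blast
  next
    case notc: False
    show False
    proof (cases "primeideal M R")
      case True
      have "PF M {M} 1"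
        unfolding PF_def using True
      proof (intro conjI allI impI ballI)
        fix xs :: "'a list" assume "length xs = 1" "set xs \<subseteq> carrier R" "\<forall>x\<in>set xs. \<forall>P\<in>{M}. x \<in> P"
        then obtain x where "xs = [x]" "x \<in> M" "x \<in> carrier R"
          by (cases xs) auto
        then show "foldr (\<otimes>) xs \<one> \<in> M" by simp
      qed auto
      then show False using nM by blast
    next
      case False
      then obtain a b where ab: "a \<in> carrier R" "b \<in> carrier R" "a \<otimes> b \<in> M" "a \<notin> M" "b \<notin> M"
        using primeidealI[OF Mi is_cring] notc by blast
      define J1 where "J1 = set_add R M (PIdl a)"
      define J2 where "J2 = set_add R M (PIdl b)"
      have J1i: "ideal J1 R" unfolding J1_def by (rule add_ideals[OF Mi cgenideal_ideal[OF ab(1)]])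
      have J2i: "ideal J2 R" unfolding J2_def by (rule add_ideals[OF Mi cgenideal_ideal[OF ab(2)]])
      have MJ1: "M \<subseteq> J1"
      proof
        fix x assume x: "x \<in> M"
        then have "x = x \<oplus> \<zero> \<otimes> a" using ab(1) Mi.Icarr[OF x] by simp
        then show "x \<in> J1" unfolding J1_def mem_sum_pidl using x by blast
      qed
      have MJ2: "M \<subseteq> J2"
      proof
        fix x assume x: "x \<in> M"
        then have "x = x \<oplus> \<zero> \<otimes> b" using ab(2) Mi.Icarr[OF x] by simp
        then show "x \<in> J2" unfolding J2_def mem_sum_pidl using x by blast
      qed
      have aJ1: "a \<in> J1"
      proof -
        have "a = \<zero> \<oplus> \<one> \<otimes> a" using ab(1) by simp
        then show ?thesis unfolding J1_def mem_sum_pidl using Mi.zero_closed by blast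
      qed
      have bJ2: "b \<in> J2"
      proof -
        have "b = \<zero> \<oplus> \<one> \<otimes> b" using ab(2) by simp
        then show ?thesis unfolding J2_def mem_sum_pidl using Mi.zero_closed by blast
      qed
      obtain F1 k1 where P1: "PF J1 F1 k1" using good[OF J1i MJ1] aJ1 ab(4) by blast
      obtain F2 k2 where P2: "PF J2 F2 k2" using good[OF J2i MJ2] bJ2 ab(5) by blast
      have prod: "y \<otimes> z \<in> M" if y: "y \<in> J1" and z: "z \<in> J2" for y z
      proof -
        obtain m1 r1 where m1: "m1 \<in> M" "r1 \<in> carrier R" "y = m1 \<oplus> r1 \<otimes> a"
          using y unfolding J1_def mem_sum_pidl by blast
        obtain m2 r2 where m2: "m2 \<in> M" "r2 \<in> carrier R" "z = m2 \<oplus> r2 \<otimes> b"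
          using z unfolding J2_def mem_sum_pidl by blast
        have c: "m1 \<in> carrier R" "m2 \<in> carrier R" using m1 m2 Mi.Icarr by auto
        have zc: "z \<in> carrier R" using m2 c ab by simp
        have "y \<otimes> z = m1 \<otimes> z \<oplus> ((r1 \<otimes> a) \<otimes> m2 \<oplus> (r1 \<otimes> r2) \<otimes> (a \<otimes> b))"
          using m1 m2 c ab by algebra
        moreover have "m1 \<otimes> z \<in> M" using Mi.I_r_closed[OF m1(1) zc] .
        moreover have "(r1 \<otimes> a) \<otimes> m2 \<in> M" using Mi.I_l_closed[OF m2(1)] m1 ab by simp
        moreover have "(r1 \<otimes> r2) \<otimes> (a \<otimes> b) \<in> M" using Mi.I_l_closed[OF ab(3)] m1 m2 by simp
        ultimately show ?thesis by (simp add: Mi.a_closed)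
      qed
      have fin1: "finite F1" and pr1: "\<forall>P\<in>F1. primeideal P R \<and> J1 \<subseteq> P"
        and cov1: "\<forall>P. primeideal P R \<and> J1 \<subseteq> P \<longrightarrow> (\<exists>P'\<in>F1. P' \<subseteq> P)"
        and nil1: "\<forall>xs. length xs = k1 \<longrightarrow> set xs \<subseteq> carrier R \<longrightarrow> (\<forall>x\<in>set xs. \<forall>P\<in>F1. x \<in> P) \<longrightarrow>
        foldr (\<otimes>) xs \<one> \<in> J1"
        using P1 unfolding PF_def by blast+
      have fin2: "finite F2" and pr2: "\<forall>P\<in>F2. primeideal P R \<and> J2 \<subseteq> P"
        and cov2: "\<forall>P. primeideal P R \<and> J2 \<subseteq> P \<longrightarrow> (\<exists>P'\<in>F2. P' \<subseteq> P)"
        and nil2: "\<forall>xs. length xs = k2 \<longrightarrow> set xs \<subseteq> carrier R \<longrightarrow> (\<forall>x\<in>set xs. \<forall>P\<in>F2. x \<in> P) \<longrightarrow>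
        foldr (\<otimes>) xs \<one> \<in> J2"
        using P2 unfolding PF_def by blast+
      have "PF M (F1 \<union> F2) (k1 + k2)"
        unfolding PF_def
      proof (intro conjI allI impI ballI)
        show "finite (F1 \<union> F2)" using fin1 fin2 by simp
      next
        fix P assume "P \<in> F1 \<union> F2"
        then show "primeideal P R" "M \<subseteq> P" using pr1 pr2 MJ1 MJ2 by blast+
      next
        fix P assume P: "primeideal P R \<and> M \<subseteq> P"
        interpret Pp: primeideal P R using P by blast
        have "a \<in> P \<or> b \<in> P" using Pp.I_prime[OF ab(1,2)] ab(3) P by blast
        then show "\<exists>P'\<in>F1 \<union> F2. P' \<subseteq> P"
        proof
          assume aP: "a \<in> P"
          have "J1 \<subseteq> P"
          proof
            fix x assume "x \<in> J1"
            then obtain m r where "m \<in> M" "r \<in> carrier R" "x = m \<oplus> r \<otimes> a"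
              unfolding J1_def mem_sum_pidl by blast
            then show "x \<in> P" using P aP Pp.I_l_closed Pp.a_closed by blast
          qed
          then show ?thesis using cov1 Pp.primeideal by blast
        next
          assume bP: "b \<in> P"
          have "J2 \<subseteq> P"
          proof
            fix x assume "x \<in> J2"
            then obtain m r where "m \<in> M" "r \<in> carrier R" "x = m \<oplus> r \<otimes> b"
              unfolding J2_def mem_sum_pidl by blast
            then show "x \<in> P" using P bP Pp.I_l_closed Pp.a_closed by blast
          qed
          then show ?thesis using cov2 Pp.primeideal by blast
        qed
      next
        fix xs :: "'a list" assume len: "length xs = k1 + k2" and xc: "set xs \<subseteq> carrier R"
          and xP: "\<forall>x\<in>set xs. \<forall>P\<in>F1 \<union> F2. x \<in> P"
        define ys where "ys = take k1 xs"
        define zs where "zs = drop k1 xs"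
        have xs: "xs = ys @ zs" unfolding ys_def zs_def by simp
        have sy: "set ys \<subseteq> set xs" unfolding ys_def by (rule set_take_subset)
        have sz: "set zs \<subseteq> set xs" unfolding zs_def by (rule set_drop_subset)
        have yc: "set ys \<subseteq> carrier R" using sy xc by (rule subset_trans)
        have zc: "set zs \<subseteq> carrier R" using sz xc by (rule subset_trans)
        have ly: "length ys = k1" unfolding ys_def using len by simp
        have lz: "length zs = k2" unfolding zs_def using len by simp
        have "\<forall>x\<in>set ys. \<forall>P\<in>F1. x \<in> P" using xP sy by blast
        then have "foldr (\<otimes>) ys \<one> \<in> J1"
          using nil1 ly yc by blast
        moreover have "\<forall>x\<in>set zs. \<forall>P\<in>F2. x \<in> P" using xP sz by blast
        then have "foldr (\<otimes>) zs \<one> \<in> J2"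
          using nil2 lz zc by blast
        ultimately show "foldr (\<otimes>) xs \<one> \<in> M"
          unfolding xs foldr_append_mult[OF yc zc] using prod by blast
      qed
      then show False using nM by blast
    qed
  qed
qed

end

context cnoeth begin

lemma minprime_struct:
  obtains k where "finite {P. minimal_prime R P}"
    "\<And>P. primeideal P R \<Longrightarrow> \<exists>P'. minimal_prime R P' \<and> P' \<subseteq> P"
    "\<And>xs. length xs = k \<Longrightarrow> set xs \<subseteq> carrier R \<Longrightarrow>
        (\<forall>x\<in>set xs. \<forall>P. minimal_prime R P \<longrightarrow> x \<in> P) \<Longrightarrow> foldr (\<otimes>) xs \<one> = \<zero>"
proof -
  obtain F k where PF: "PF {\<zero>} F k" using PF_exists[OF zeroideal] by blast
  have fin: "finite F" and pr: "\<forall>P\<in>F. primeideal P R \<and> {\<zero>} \<subseteq> P"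
    and cov: "\<forall>P. primeideal P R \<and> {\<zero>} \<subseteq> P \<longrightarrow> (\<exists>P'\<in>F. P' \<subseteq> P)"
    and nil: "\<forall>xs. length xs = k \<longrightarrow> set xs \<subseteq> carrier R \<longrightarrow> (\<forall>x\<in>set xs. \<forall>P\<in>F. x \<in> P) \<longrightarrow>
        foldr (\<otimes>) xs \<one> \<in> {\<zero>}"
    using PF unfolding PF_def by blast+
  have z: "{\<zero>} \<subseteq> P" if "primeideal P R" for P
  proof -
    have "ideal P R" using that by (simp add: primeideal_def)
    then show ?thesis using additive_subgroup.zero_closed[OF ideal.axioms(1)] by blast
  qed
  have A: "P \<in> F" if "minimal_prime R P" for P
  proof -
    have p: "primeideal P R" and m: "\<forall>P'. primeideal P' R \<and> P' \<subseteq> P \<longrightarrow> P' = P"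
      using that unfolding minimal_prime_def by blast+
    obtain P' where "P' \<in> F" "P' \<subseteq> P" using cov z[OF p] p by blast
    moreover then have "primeideal P' R" using pr by blast
    ultimately show ?thesis using m by blast
  qed
  have B: "\<exists>m. minimal_prime R m \<and> m \<subseteq> P" if PinF: "P \<in> F" for P
  proof -
    obtain m where m: "m \<in> F" "m \<subseteq> P" and mm: "\<forall>b\<in>F. b \<subseteq> m \<longrightarrow> m = b"
      using finite_has_minimal2[OF fin PinF] by blast
    have "minimal_prime R m"
      unfolding minimal_prime_def
    proof (intro conjI allI impI)
      show pm: "primeideal m R" using pr m(1) by blast
      fix P' assume P': "primeideal P' R \<and> P' \<subseteq> m"
      obtain P'' where "P'' \<in> F" "P'' \<subseteq> P'" using cov z P' by blast
      then show "P' = m" using mm P' by blast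
    qed
    then show ?thesis using m(2) by blast
  qed
  show ?thesis
  proof
    have "{P. minimal_prime R P} \<subseteq> F" using A by blast
    then show "finite {P. minimal_prime R P}" using fin by (rule finite_subset)
  next
    fix P assume "primeideal P R"
    then obtain P' where "P' \<in> F" "P' \<subseteq> P" using cov z by blast
    then show "\<exists>P'. minimal_prime R P' \<and> P' \<subseteq> P" using B by blast
  next
    fix xs :: "'a list" assume l: "length xs = k" and c: "set xs \<subseteq> carrier R"
      and h: "\<forall>x\<in>set xs. \<forall>P. minimal_prime R P \<longrightarrow> x \<in> P"
    have "\<forall>x\<in>set xs. \<forall>P\<in>F. x \<in> P"
    proof (intro ballI)
      fix x P assume "x \<in> set xs" "P \<in> F"
      then show "x \<in> P" using B h by blast
    qed
    then show "foldr (\<otimes>) xs \<one> = \<zero>" using nil l c by blast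
  qed
qed

end

context cring begin
lemma prime_contains_inter:
  assumes fin: "finite \<J>" and ne: "\<J> \<noteq> {}" and id: "\<And>J. J \<in> \<J> \<Longrightarrow> ideal J R"
    and P: "primeideal P R" and sub: "\<Inter>\<J> \<subseteq> P"
  shows "\<exists>J\<in>\<J>. J \<subseteq> P"
  using fin ne id sub
proof (induction \<J> rule: finite_ne_induct)
  case (singleton J)
  then show ?case by simp
next
  case (insert J \<J>)
  show ?case
  proof (rule ccontr)
    assume no: "\<not> (\<exists>J'\<in>insert J \<J>. J' \<subseteq> P)"
    have ids: "\<And>J'. J' \<in> \<J> \<Longrightarrow> ideal J' R" using insert.prems(1) by simp
    have "\<not> (\<Inter>\<J> \<subseteq> P)"
    proof
      assume "\<Inter>\<J> \<subseteq> P"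
      then obtain J' where "J' \<in> \<J>" "J' \<subseteq> P" using insert.IH[OF ids] by blast
      then show False using no by blast
    qed
    then obtain y where y: "y \<in> \<Inter>\<J>" "y \<notin> P" by blast
    obtain x where x: "x \<in> J" "x \<notin> P" using no by blast
    have Ji: "ideal J R" using insert.prems(1) by blast
    obtain J0 where "J0 \<in> \<J>" using insert.hyps(2) by blast
    then have J0: "ideal J0 R" using insert.prems(1) by blast
    have "y \<in> J0" using y(1) \<open>J0 \<in> \<J>\<close> by blast
    then have yc: "y \<in> carrier R" by (rule ideal.Icarr[OF J0])
    have xc: "x \<in> carrier R" using ideal.Icarr[OF Ji x(1)] .
    have "x \<otimes> y \<in> J" using ideal.I_r_closed[OF Ji x(1) yc] .
    moreover have "x \<otimes> y \<in> \<Inter>\<J>"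
    proof
      fix J' assume J': "J' \<in> \<J>"
      then have J'i: "ideal J' R" using insert.prems(1) by blast
      have "y \<in> J'" using y(1) J' by blast
      then show "x \<otimes> y \<in> J'" by (rule ideal.I_l_closed[OF J'i _ xc])
    qed
    ultimately have "x \<otimes> y \<in> P" using insert.prems(2) by auto
    then show False using primeideal.I_prime[OF P xc yc] x y by blast
  qed
qed
end

context skewctx begin

definition \<beta> where "\<beta> = inv_into (carrier R) \<alpha>"

lemma beta_iso: "\<beta> \<in> ring_iso R R"
  unfolding \<beta>_def by (rule ring_iso_set_sym[OF ring_axioms iso])

lemma alpha_hom: "\<alpha> \<in> ring_hom R R" using iso unfolding ring_iso_def by blast
lemma beta_hom: "\<beta> \<in> ring_hom R R" using beta_iso unfolding ring_iso_def by blast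
lemma alpha_bij: "bij_betw \<alpha> (carrier R) (carrier R)" using iso unfolding ring_iso_def by blast

lemma alpha_closed[simp]: "x \<in> carrier R \<Longrightarrow> \<alpha> x \<in> carrier R"
  by (rule ring_hom_closed[OF alpha_hom])
lemma beta_closed[simp]: "x \<in> carrier R \<Longrightarrow> \<beta> x \<in> carrier R"
  by (rule ring_hom_closed[OF beta_hom])
lemma alpha_beta[simp]: "x \<in> carrier R \<Longrightarrow> \<alpha> (\<beta> x) = x"
  unfolding \<beta>_def using alpha_bij by (simp add: bij_betw_def f_inv_into_f)
lemma beta_alpha[simp]: "x \<in> carrier R \<Longrightarrow> \<beta> (\<alpha> x) = x"
  unfolding \<beta>_def using alpha_bij by (simp add: bij_betw_def inv_into_f_f)

lemma img_alpha: "X \<subseteq> carrier R \<Longrightarrow> \<alpha> ` X = {x \<in> carrier R. \<beta> x \<in> X}"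
proof (intro equalityI subsetI)
  fix y assume X: "X \<subseteq> carrier R" and "y \<in> \<alpha> ` X"
  then obtain x where "x \<in> X" "y = \<alpha> x" by blast
  then show "y \<in> {x \<in> carrier R. \<beta> x \<in> X}" using X by auto
next
  fix y assume X: "X \<subseteq> carrier R" and "y \<in> {x \<in> carrier R. \<beta> x \<in> X}"
  then have "y = \<alpha> (\<beta> y)" "\<beta> y \<in> X" by auto
  then show "y \<in> \<alpha> ` X" by blast
qed

lemma img_beta: "X \<subseteq> carrier R \<Longrightarrow> \<beta> ` X = {x \<in> carrier R. \<alpha> x \<in> X}"
proof (intro equalityI subsetI)
  fix y assume X: "X \<subseteq> carrier R" and "y \<in> \<beta> ` X"
  then obtain x where "x \<in> X" "y = \<beta> x" by blast
  then show "y \<in> {x \<in> carrier R. \<alpha> x \<in> X}" using X by auto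
next
  fix y assume X: "X \<subseteq> carrier R" and "y \<in> {x \<in> carrier R. \<alpha> x \<in> X}"
  then have "y = \<beta> (\<alpha> y)" "\<alpha> y \<in> X" by auto
  then show "y \<in> \<beta> ` X" by blast
qed

lemma ab_img: "X \<subseteq> carrier R \<Longrightarrow> \<alpha> ` (\<beta> ` X) = X"
  by (force simp: image_iff)
lemma ba_img: "X \<subseteq> carrier R \<Longrightarrow> \<beta> ` (\<alpha> ` X) = X"
  by (force simp: image_iff)

lemma a_img_sub: "X \<subseteq> carrier R \<Longrightarrow> \<alpha> ` X \<subseteq> carrier R" by auto
lemma b_img_sub: "X \<subseteq> carrier R \<Longrightarrow> \<beta> ` X \<subseteq> carrier R" by auto

lemma prime_sub: "primeideal P R \<Longrightarrow> P \<subseteq> carrier R"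
  using ideal.Icarr[of P R] primeideal.axioms(1)[of P R] by blast

lemma prime_alpha: assumes "primeideal P R" shows "primeideal (\<alpha> ` P) R"
proof -
  interpret h: ring_hom_ring R R \<beta> by (rule ring_hom_ringI2[OF ring_axioms ring_axioms beta_hom])
  show ?thesis unfolding img_alpha[OF prime_sub[OF assms]]
    by (rule h.primeideal_vimage[OF is_cring assms])
qed

lemma prime_beta: assumes "primeideal P R" shows "primeideal (\<beta> ` P) R"
proof -
  interpret h: ring_hom_ring R R \<alpha> by (rule ring_hom_ringI2[OF ring_axioms ring_axioms alpha_hom])
  show ?thesis unfolding img_beta[OF prime_sub[OF assms]]
    by (rule h.primeideal_vimage[OF is_cring assms])
qed

lemma min_alpha: assumes m: "minimal_prime R P" shows "minimal_prime R (\<alpha> ` P)"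
proof -
  have p: "primeideal P R" and mm: "\<And>P'. primeideal P' R \<Longrightarrow> P' \<subseteq> P \<Longrightarrow> P' = P"
    using m unfolding minimal_prime_def by blast+
  show ?thesis unfolding minimal_prime_def
  proof (intro conjI allI impI)
    show "primeideal (\<alpha> ` P) R" by (rule prime_alpha[OF p])
    fix P' assume P': "primeideal P' R \<and> P' \<subseteq> \<alpha> ` P"
    have "\<beta> ` P' \<subseteq> \<beta> ` (\<alpha> ` P)" using P' by blast
    then have "\<beta> ` P' \<subseteq> P" using ba_img[OF prime_sub[OF p]] by simp
    then have "\<beta> ` P' = P" using mm prime_beta P' by blast
    then show "P' = \<alpha> ` P" using ab_img[OF prime_sub] P' by metis
  qed
qed

lemma min_beta: assumes m: "minimal_prime R P" shows "minimal_prime R (\<beta> ` P)"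
proof -
  have p: "primeideal P R" and mm: "\<And>P'. primeideal P' R \<Longrightarrow> P' \<subseteq> P \<Longrightarrow> P' = P"
    using m unfolding minimal_prime_def by blast+
  show ?thesis unfolding minimal_prime_def
  proof (intro conjI allI impI)
    show "primeideal (\<beta> ` P) R" by (rule prime_beta[OF p])
    fix P' assume P': "primeideal P' R \<and> P' \<subseteq> \<beta> ` P"
    have "\<alpha> ` P' \<subseteq> \<alpha> ` (\<beta> ` P)" using P' by blast
    then have "\<alpha> ` P' \<subseteq> P" using ab_img[OF prime_sub[OF p]] by simp
    then have "\<alpha> ` P' = P" using mm prime_alpha P' by blast
    then show "P' = \<beta> ` P" using ba_img[OF prime_sub] P' by metis
  qed
qed

lemma pow_img_Suc: "(\<alpha> ^^ Suc i) ` X = \<alpha> ` ((\<alpha> ^^ i) ` X)"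
  by (simp add: image_comp)

lemma pow_img_add: "(\<alpha> ^^ (i + j)) ` X = (\<alpha> ^^ i) ` ((\<alpha> ^^ j) ` X)"
  by (simp add: image_comp funpow_add)

lemma min_pow: "minimal_prime R P \<Longrightarrow> minimal_prime R ((\<alpha> ^^ i) ` P)"
  by (induction i) (simp_all add: pow_img_Suc min_alpha del: funpow.simps)

lemma stable_inter:
  assumes sub: "\<And>X. X \<in> \<G> \<Longrightarrow> X \<subseteq> carrier R"
    and a: "\<And>X. X \<in> \<G> \<Longrightarrow> \<alpha> ` X \<in> \<G>" and b: "\<And>X. X \<in> \<G> \<Longrightarrow> \<beta> ` X \<in> \<G>"
  shows "\<alpha> ` (carrier R \<inter> \<Inter>\<G>) = carrier R \<inter> \<Inter>\<G>"
proof (intro equalityI subsetI)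
  fix y assume "y \<in> \<alpha> ` (carrier R \<inter> \<Inter>\<G>)"
  then obtain x where x: "x \<in> carrier R" "x \<in> \<Inter>\<G>" "y = \<alpha> x" by blast
  have "y \<in> X" if X: "X \<in> \<G>" for X
  proof -
    have "x \<in> \<beta> ` X" using x b[OF X] by blast
    then have "\<alpha> x \<in> \<alpha> ` (\<beta> ` X)" by blast
    then show ?thesis using ab_img[OF sub[OF X]] x by simp
  qed
  then show "y \<in> carrier R \<inter> \<Inter>\<G>" using x by auto
next
  fix y assume y: "y \<in> carrier R \<inter> \<Inter>\<G>"
  have "\<beta> y \<in> X" if X: "X \<in> \<G>" for X
  proof -
    have "y \<in> \<alpha> ` X" using y a[OF X] by blast
    then have "\<beta> y \<in> \<beta> ` (\<alpha> ` X)" by blast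
    then show ?thesis using ba_img[OF sub[OF X]] by simp
  qed
  then have "\<beta> y \<in> carrier R \<inter> \<Inter>\<G>" using y by auto
  moreover have "y = \<alpha> (\<beta> y)" using y by simp
  ultimately show "y \<in> \<alpha> ` (carrier R \<inter> \<Inter>\<G>)" by blast
qed

end

context skewctx begin

lemma stable_set:
  assumes "X \<subseteq> carrier R" "\<And>x. x \<in> X \<Longrightarrow> \<alpha> x \<in> X" "\<And>x. x \<in> X \<Longrightarrow> \<beta> x \<in> X"
  shows "\<alpha> ` X = X"
proof (intro equalityI subsetI)
  fix y assume "y \<in> \<alpha> ` X" then show "y \<in> X" using assms(2) by blast
next
  fix y assume y: "y \<in> X"
  then have "y = \<alpha> (\<beta> y)" using assms(1) by auto
  then show "y \<in> \<alpha> ` X" using assms(3)[OF y] by blast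
qed

lemma beta_stable: assumes "\<alpha> ` X = X" "X \<subseteq> carrier R" "x \<in> X" shows "\<beta> x \<in> X"
proof -
  obtain z where "z \<in> X" "x = \<alpha> z" using assms by blast
  then show ?thesis using assms(2) by auto
qed

lemma one_ne_zero_S:
  assumes P: "prime_ring S" shows "\<one> \<noteq> \<zero>"
proof
  assume e: "\<one> = \<zero>"
  have "carrier S \<subseteq> {\<zero>\<^bsub>S\<^esub>}"
  proof
    fix f assume f: "f \<in> carrier S"
    have "f k = \<zero>" for k
    proof -
      have "f k = f k \<otimes> \<one>" using S_coeff[OF f] by simp
      then show ?thesis using e S_coeff[OF f] by simp
    qed
    then show "f \<in> {\<zero>\<^bsub>S\<^esub>}" by (auto simp: S_zero)
  qed
  moreover have "\<zero>\<^bsub>S\<^esub> \<in> carrier S" using ring.ring_simprules(2)[OF Sring] .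
  ultimately show False using P unfolding prime_ring_def by blast
qed

lemma foldr_replicate_one: "foldr (\<otimes>) (replicate k \<one>) \<one> = \<one>"
  by (induction k) auto

lemma ann_ideal:
  assumes N: "N \<subseteq> carrier R"
  shows "ideal {r \<in> carrier R. \<forall>y\<in>N. r \<otimes> y = \<zero>} R"
proof (rule idealI[OF ring_axioms])
  let ?A = "{r \<in> carrier R. \<forall>y\<in>N. r \<otimes> y = \<zero>}"
  show "subgroup ?A (add_monoid R)"
  proof
    show "?A \<subseteq> carrier (add_monoid R)" by auto
    show "\<one>\<^bsub>add_monoid R\<^esub> \<in> ?A" using N by auto
    fix x y assume x: "x \<in> ?A" and y: "y \<in> ?A"
    have "(x \<oplus> y) \<otimes> z = \<zero>" if z: "z \<in> N" for z
    proof -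
      have zc: "z \<in> carrier R" using z N by blast
      have "(x \<oplus> y) \<otimes> z = x \<otimes> z \<oplus> y \<otimes> z" using x y zc by (simp add: l_distr)
      then show ?thesis using x y z by simp
    qed
    then show "x \<otimes>\<^bsub>add_monoid R\<^esub> y \<in> ?A" using x y by auto
  next
    fix x assume x: "x \<in> ?A"
    have "(\<ominus> x) \<otimes> z = \<zero>" if z: "z \<in> N" for z
    proof -
      have zc: "z \<in> carrier R" using z N by blast
      have "(\<ominus> x) \<otimes> z = \<ominus> (x \<otimes> z)" using x zc by (simp add: l_minus)
      then show ?thesis using x z by simp
    qed
    then have "\<ominus> x \<in> ?A" using x by auto
    then show "inv\<^bsub>add_monoid R\<^esub> x \<in> ?A" by (simp add: a_inv_def)
  qed
next
  fix a x assume a: "a \<in> {r \<in> carrier R. \<forall>y\<in>N. r \<otimes> y = \<zero>}" and x: "x \<in> carrier R"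
  have "(x \<otimes> a) \<otimes> y = \<zero>" if y: "y \<in> N" for y
  proof -
    have yc: "y \<in> carrier R" using y N by blast
    have "(x \<otimes> a) \<otimes> y = x \<otimes> (a \<otimes> y)" using a x yc by (simp add: m_assoc)
    then show ?thesis using a y x by simp
  qed
  then show "x \<otimes> a \<in> {r \<in> carrier R. \<forall>y\<in>N. r \<otimes> y = \<zero>}" using a x by auto
  have "(a \<otimes> x) \<otimes> y = \<zero>" if y: "y \<in> N" for y
  proof -
    have yc: "y \<in> carrier R" using y N by blast
    have ac: "a \<in> carrier R" using a by blast
    have "(a \<otimes> x) \<otimes> y = x \<otimes> (a \<otimes> y)" using ac x yc by algebra
    then show ?thesis using a y x by simp
  qed
  then show "a \<otimes> x \<in> {r \<in> carrier R. \<forall>y\<in>N. r \<otimes> y = \<zero>}" using a x by auto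
qed

lemma nil_zero:
  assumes ap: "alpha_prime_ring R \<alpha>" and P: "prime_ring S"
    and Ni: "ideal N R" and Ns: "\<alpha> ` N = N"
    and nil: "\<And>xs. length xs = k \<Longrightarrow> set xs \<subseteq> N \<Longrightarrow> foldr (\<otimes>) xs \<one> = \<zero>"
  shows "N = {\<zero>}"
proof -
  have Nc: "N \<subseteq> carrier R" using ideal.Icarr[OF Ni] by blast
  have z: "\<zero> \<in> N" using additive_subgroup.zero_closed[OF ideal.axioms(1)[OF Ni]] .
  have one: "\<one> \<noteq> \<zero>" by (rule one_ne_zero_S[OF P])
  define ann where "ann = {r \<in> carrier R. \<forall>y\<in>N. r \<otimes> y = \<zero>}"
  have anni: "ideal ann R" unfolding ann_def by (rule ann_ideal[OF Nc])
  have annc: "ann \<subseteq> carrier R" unfolding ann_def by blast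
  have anns: "\<alpha> ` ann = ann"
  proof (rule stable_set[OF annc])
    fix r assume r: "r \<in> ann"
    have "\<alpha> r \<otimes> y = \<zero>" if y: "y \<in> N" for y
    proof -
      have yc: "y \<in> carrier R" using y Nc by blast
      have bY: "\<beta> y \<in> N" using beta_stable[OF Ns Nc y] .
      have rc: "r \<in> carrier R" using r annc by blast
      have "\<alpha> r \<otimes> y = \<alpha> r \<otimes> \<alpha> (\<beta> y)" using yc by simp
      also have "\<dots> = \<alpha> (r \<otimes> \<beta> y)" using ring_hom_mult[OF alpha_hom rc beta_closed[OF yc]] by simp
      also have "r \<otimes> \<beta> y = \<zero>" using r bY unfolding ann_def by blast
      finally show ?thesis using pow_zero[of 1] by simp
    qed
    then show "\<alpha> r \<in> ann" using r annc unfolding ann_def by auto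
  next
    fix r assume r: "r \<in> ann"
    have "\<beta> r \<otimes> y = \<zero>" if y: "y \<in> N" for y
    proof -
      have yc: "y \<in> carrier R" using y Nc by blast
      have ay: "\<alpha> y \<in> N" using Ns y by blast
      have rc: "r \<in> carrier R" using r annc by blast
      have "\<beta> r \<otimes> y = \<beta> r \<otimes> \<beta> (\<alpha> y)" using yc by simp
      also have "\<dots> = \<beta> (r \<otimes> \<alpha> y)" using ring_hom_mult[OF beta_hom rc alpha_closed[OF yc]] by simp
      also have "r \<otimes> \<alpha> y = \<zero>" using r ay unfolding ann_def by blast
      finally show ?thesis using ring_hom_zero[OF beta_hom ring_axioms ring_axioms] by simp
    qed
    then show "\<beta> r \<in> ann" using r annc unfolding ann_def by auto
  qed
  define J where "J = {j. j \<le> k \<and> (\<exists>xs. length xs = j \<and> set xs \<subseteq> N \<and> foldr (\<otimes>) xs \<one> \<noteq> \<zero>)}"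
  have J0: "0 \<in> J" unfolding J_def using one by auto
  have finJ: "finite J" unfolding J_def by auto
  have MJ: "Max J \<in> J" "\<And>j. j \<in> J \<Longrightarrow> j \<le> Max J"
    using Max_in[OF finJ] J0 Max_ge[OF finJ] by blast+
  define j where "j = Max J"
  obtain xs where xs: "length xs = j" "set xs \<subseteq> N" "foldr (\<otimes>) xs \<one> \<noteq> \<zero>" and jk: "j \<le> k"
    using MJ(1) unfolding J_def j_def by blast
  have "j \<noteq> k" using nil xs by blast
  then have jk': "Suc j \<le> k" using jk by simp
  define x where "x = foldr (\<otimes>) xs \<one>"
  have xc: "x \<in> carrier R" unfolding x_def using foldr_closed xs(2) Nc by blast
  have "x \<in> ann"
  proof -
    have "x \<otimes> y = \<zero>" if y: "y \<in> N" for y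
    proof (rule ccontr)
      assume ne: "x \<otimes> y \<noteq> \<zero>"
      have yc: "y \<in> carrier R" using y Nc by blast
      have "foldr (\<otimes>) (y # xs) \<one> = y \<otimes> x" unfolding x_def by simp
      also have "\<dots> = x \<otimes> y" using xc yc by (simp add: m_comm)
      finally have "Suc j \<in> J" unfolding J_def using jk' ne xs y by (intro CollectI conjI exI[of _ "y # xs"]) auto
      then have "Suc j \<le> j" using MJ(2) unfolding j_def by blast
      then show False by simp
    qed
    then show ?thesis unfolding ann_def using xc by blast
  qed
  moreover have "x \<noteq> \<zero>" using xs(3) unfolding x_def .
  ultimately have annnz: "\<not> ann \<subseteq> {\<zero>}" by blast
  have "s = \<zero>" if "s \<in> ideal_prod R N ann" for s
    using that
  proof (induction s rule: ideal_prod.induct)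
    case (prod i j)
    have "j \<otimes> i = \<zero>" using prod unfolding ann_def by blast
    moreover have "i \<in> carrier R" "j \<in> carrier R" using prod Nc annc by blast+
    ultimately show ?case by (simp add: m_comm)
  next
    case (sum s1 s2) then show ?case by simp
  qed
  then have "ideal_prod R N ann \<subseteq> {\<zero>}" by blast
  then have "N \<subseteq> {\<zero>} \<or> ann \<subseteq> {\<zero>}"
    using ap Ni anni Ns anns unfolding alpha_prime_ring_def alpha_prime_ideal_def by blast
  then show ?thesis using annnz z by blast
qed

end

context skewctx begin

lemma inter_ideal: "\<G> \<noteq> {} \<Longrightarrow> (\<And>X. X \<in> \<G> \<Longrightarrow> ideal X R) \<Longrightarrow> ideal (\<Inter>\<G>) R"
  by (rule i_Intersect)

lemma partA:
  assumes noeth: "noetherian_ring R" and P: "prime_ring S"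
  shows "alpha_prime_ring R \<alpha> \<and>
         (\<exists>(n::nat) Q. 0 < n \<and> primeideal Q R \<and>
            inj_on (\<lambda>i. (\<alpha> ^^ i) ` Q) {..<n} \<and>
            {P. minimal_prime R P} = (\<lambda>i. (\<alpha> ^^ i) ` Q) ` {..<n} \<and>
            (\<alpha> ^^ n) ` Q = Q \<and>
            (\<Inter>i\<in>{..<n}. (\<alpha> ^^ i) ` Q) = {\<zero>})"
proof -
  have ap: "alpha_prime_ring R \<alpha>" by (rule alpha_prime[OF P])
  have apr: "\<And>I J. ideal I R \<Longrightarrow> ideal J R \<Longrightarrow> \<alpha> ` I = I \<Longrightarrow> \<alpha> ` J = J \<Longrightarrow>
      ideal_prod R I J \<subseteq> {\<zero>} \<Longrightarrow> I \<subseteq> {\<zero>} \<or> J \<subseteq> {\<zero>}"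
    using ap unfolding alpha_prime_ring_def alpha_prime_ideal_def by blast
  interpret cn: cnoeth R by (intro cnoeth.intro cring_axioms noeth)
  obtain k where finMP: "finite {P. minimal_prime R P}"
    and cover: "\<And>P. primeideal P R \<Longrightarrow> \<exists>P'. minimal_prime R P' \<and> P' \<subseteq> P"
    and nil: "\<And>xs. length xs = k \<Longrightarrow> set xs \<subseteq> carrier R \<Longrightarrow>
        (\<forall>x\<in>set xs. \<forall>P. minimal_prime R P \<longrightarrow> x \<in> P) \<Longrightarrow> foldr (\<otimes>) xs \<one> = \<zero>"
    using cn.minprime_struct by blast
  define MP where "MP = {P. minimal_prime R P}"
  have one: "\<one> \<noteq> \<zero>" by (rule one_ne_zero_S[OF P])
  have MPne: "MP \<noteq> {}"
  proof
    assume e: "MP = {}"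
    have "foldr (\<otimes>) (replicate k \<one>) \<one> = \<zero>"
      by (rule nil) (use e in \<open>auto simp: MP_def\<close>)
    then show False using one foldr_replicate_one by simp
  qed
  have MPp: "primeideal X R" if "X \<in> MP" for X using that unfolding MP_def minimal_prime_def by blast
  have MPc: "X \<subseteq> carrier R" if "X \<in> MP" for X using prime_sub[OF MPp[OF that]] .
  have MPi: "ideal X R" if "X \<in> MP" for X using MPp[OF that] by (simp add: primeideal_def)
  have MPm: "\<And>P'. primeideal P' R \<Longrightarrow> P' \<subseteq> X \<Longrightarrow> P' = X" if "X \<in> MP" for X
    using that unfolding MP_def minimal_prime_def by blast
  have MPa: "\<alpha> ` X \<in> MP" if "X \<in> MP" for X using min_alpha that unfolding MP_def by blast
  have MPb: "\<beta> ` X \<in> MP" if "X \<in> MP" for X using min_beta that unfolding MP_def by blast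
  define N where "N = \<Inter>MP"
  have NI: "N = carrier R \<inter> \<Inter>MP" unfolding N_def using MPne MPc by blast
  have Ni: "ideal N R" unfolding N_def by (rule inter_ideal[OF MPne MPi])
  have Ns: "\<alpha> ` N = N" unfolding NI by (rule stable_inter[OF MPc MPa MPb])
  have N0: "N = {\<zero>}"
  proof (rule nil_zero[OF ap P Ni Ns])
    fix xs :: "'a list" assume "length xs = k" "set xs \<subseteq> N"
    then show "foldr (\<otimes>) xs \<one> = \<zero>" using nil NI unfolding MP_def by blast
  qed
  obtain Q where QMP: "Q \<in> MP" using MPne by blast
  define f where "f i = (\<alpha> ^^ i) ` Q" for i
  have Qc: "Q \<subseteq> carrier R" using MPc[OF QMP] .
  have fMP: "f i \<in> MP" for i using min_pow QMP unfolding f_def MP_def by blast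
  have fc: "f i \<subseteq> carrier R" for i using MPc[OF fMP] .
  have f0: "f 0 = Q" unfolding f_def by simp
  have fadd: "f (i + j) = (\<alpha> ^^ i) ` (f j)" for i j unfolding f_def by (rule pow_img_add)
  have cancel: "f (j - i) = Q" if "f i = f j" "i \<le> j" for i j
  proof -
    have "(\<alpha> ^^ i) ` (f (j - i)) = f j" using fadd[of i "j - i"] that(2) by simp
    also have "\<dots> = (\<alpha> ^^ i) ` Q" using that(1) unfolding f_def by simp
    finally show ?thesis using inj_on_image_eq_iff[OF pow_inj fc Qc] by blast
  qed
  have "\<not> inj f"
  proof
    assume "inj f"
    moreover have "finite (range f)" using finite_subset[OF _ finMP] fMP unfolding MP_def by blast
    ultimately have "finite (UNIV :: nat set)" using finite_imageD by blast
    then show False by simp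
  qed
  then obtain i j where ij: "f i = f j" "i < j"
    unfolding inj_def by (metis linorder_neqE_nat)
  have exd: "\<exists>d. 0 < d \<and> f d = Q" using cancel[OF ij(1)] ij(2) by (intro exI[of _ "j - i"]) auto
  define n where "n = (LEAST d. 0 < d \<and> f d = Q)"
  have n: "0 < n" "f n = Q" using LeastI_ex[OF exd] unfolding n_def by blast+
  have nmin: "\<not> (0 < d \<and> f d = Q)" if "d < n" for d using not_less_Least[OF that[unfolded n_def]]
    unfolding n_def by blast
  have fper: "f (x + n) = f x" for x using fadd[of x n] n(2) unfolding f_def by simp
  have fper2: "f (x + m * n) = f x" for x m
  proof (induction m)
    case (Suc m)
    have "x + Suc m * n = (x + m * n) + n" by simp
    then show ?case using fper[of "x + m * n"] Suc by (simp only:)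
  qed simp
  have fmod: "f x = f (x mod n)" for x
    using fper2[of "x mod n" "x div n"] by simp
  have finj: "inj_on f {..<n}"
  proof (rule inj_onI)
    fix a b assume a: "a \<in> {..<n}" and b: "b \<in> {..<n}" and e: "f a = f b"
    show "a = b"
    proof (rule ccontr)
      assume "a \<noteq> b"
      then consider "a < b" | "b < a" by linarith
      then show False
      proof cases
        case 1
        have "f (b - a) = Q" using cancel[OF e] 1 by simp
        moreover have "b - a < n" using 1 b by auto
        ultimately show False using nmin[of "b - a"] 1 by simp
      next
        case 2
        have "f (a - b) = Q" using cancel[OF e[symmetric]] 2 by simp
        moreover have "a - b < n" using 2 a by auto
        ultimately show False using nmin[of "a - b"] 2 by simp
      qed
    qed
  qed
  define Orb where "Orb = f ` {..<n}"
  have Oc: "X \<subseteq> carrier R" if "X \<in> Orb" for X using that fc unfolding Orb_def by blast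
  have OMP: "Orb \<subseteq> MP" unfolding Orb_def using fMP by blast
  have fO: "f x \<in> Orb" for x unfolding Orb_def using fmod[of x] n(1) by simp
  have Oa: "\<alpha> ` X \<in> Orb" if XO: "X \<in> Orb" for X
  proof -
    obtain i where "X = f i" using XO unfolding Orb_def by blast
    then have "\<alpha> ` X = f (Suc i)" unfolding f_def pow_img_Suc by simp
    then show ?thesis using fO by simp
  qed
  have Ob: "\<beta> ` X \<in> Orb" if XO: "X \<in> Orb" for X
  proof -
    obtain i where X: "X = f i" using XO unfolding Orb_def by blast
    have "f i = f (Suc (i + n - 1))" using fper[of i] n(1) by simp
    also have "\<dots> = \<alpha> ` f (i + n - 1)" unfolding f_def pow_img_Suc by simp
    finally have "\<beta> ` X = f (i + n - 1)" using ba_img[OF fc] X by simp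
    then show ?thesis using fO by simp
  qed
  have One: "Orb \<noteq> {}" unfolding Orb_def using n(1) by blast
  have MPO: "MP \<subseteq> Orb"
  proof
    fix P assume PMP: "P \<in> MP"
    show "P \<in> Orb"
    proof (rule ccontr)
      assume PO: "P \<notin> Orb"
      define A where "A = \<Inter>Orb"
      define B where "B = \<Inter>(MP - Orb)"
      have MOne: "MP - Orb \<noteq> {}" using PMP PO by blast
      have AI: "A = carrier R \<inter> \<Inter>Orb" unfolding A_def using One Oc by blast
      have BI: "B = carrier R \<inter> \<Inter>(MP - Orb)" unfolding B_def using MOne MPc by blast
      have Ai: "ideal A R" unfolding A_def by (rule inter_ideal[OF One]) (use OMP MPi in blast)
      have Bi: "ideal B R" unfolding B_def by (rule inter_ideal[OF MOne]) (use MPi in blast)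
      have As: "\<alpha> ` A = A" unfolding AI by (rule stable_inter[OF Oc Oa Ob])
      have Bs: "\<alpha> ` B = B" unfolding BI
      proof (rule stable_inter)
        fix X assume X: "X \<in> MP - Orb"
        show "X \<subseteq> carrier R" using X MPc by blast
        show "\<alpha> ` X \<in> MP - Orb"
        proof -
          have "\<alpha> ` X \<notin> Orb"
          proof
            assume "\<alpha> ` X \<in> Orb"
            then have "\<beta> ` (\<alpha> ` X) \<in> Orb" by (rule Ob)
            then show False using ba_img[of X] X MPc by auto
          qed
          then show ?thesis using MPa X by blast
        qed
        show "\<beta> ` X \<in> MP - Orb"
        proof -
          have "\<beta> ` X \<notin> Orb"
          proof
            assume "\<beta> ` X \<in> Orb"
            then have "\<alpha> ` (\<beta> ` X) \<in> Orb" by (rule Oa)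
            then show False using ab_img[of X] X MPc by auto
          qed
          then show ?thesis using MPb X by blast
        qed
      qed
      have "s = \<zero>" if "s \<in> ideal_prod R A B" for s
        using that
      proof (induction s rule: ideal_prod.induct)
        case (prod a b)
        have ac: "a \<in> carrier R" using prod(1) AI by blast
        have bc: "b \<in> carrier R" using prod(2) BI by blast
        have "a \<otimes> b \<in> X" if X: "X \<in> MP" for X
        proof (cases "X \<in> Orb")
          case True
          then have "a \<in> X" using prod(1) unfolding A_def by blast
          then show ?thesis using ideal.I_r_closed[OF MPi[OF X] _ bc] by blast
        next
          case False
          then have "b \<in> X" using prod(2) X unfolding B_def by blast
          then show ?thesis using ideal.I_l_closed[OF MPi[OF X] _ ac] by blast
        qed
        then have "a \<otimes> b \<in> N" unfolding N_def by blast
        then show ?case using N0 by blast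
      next
        case (sum s1 s2) then show ?case by simp
      qed
      then have "ideal_prod R A B \<subseteq> {\<zero>}" by blast
      then have "A \<subseteq> {\<zero>} \<or> B \<subseteq> {\<zero>}" using apr[OF Ai Bi As Bs] by blast
      then show False
      proof
        assume A0: "A \<subseteq> {\<zero>}"
        have "{\<zero>} \<subseteq> P" using additive_subgroup.zero_closed[OF ideal.axioms(1)[OF MPi[OF PMP]]] by blast
        then have "\<Inter>Orb \<subseteq> P" using A0 unfolding A_def by blast
        then obtain X where X: "X \<in> Orb" "X \<subseteq> P"
          using prime_contains_inter[of Orb P] One MPp[OF PMP] OMP MPi unfolding Orb_def by blast
        then have "X = P" using MPm[OF PMP] MPp OMP by blast
        then show False using X PO by blast
      next
        assume B0: "B \<subseteq> {\<zero>}"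
        have "{\<zero>} \<subseteq> Q" using additive_subgroup.zero_closed[OF ideal.axioms(1)[OF MPi[OF QMP]]] by blast
        then have "\<Inter>(MP - Orb) \<subseteq> Q" using B0 unfolding B_def by blast
        moreover have "finite (MP - Orb)" using finMP unfolding MP_def by blast
        ultimately obtain X where X: "X \<in> MP - Orb" "X \<subseteq> Q"
          using prime_contains_inter[of "MP - Orb" Q] MOne MPp[OF QMP] MPi by blast
        then have "X = Q" using MPm[OF QMP] MPp by blast
        moreover have "Q \<in> Orb" using fO[of 0] f0 by simp
        ultimately show False using X by blast
      qed
    qed
  qed
  have MPeq: "MP = Orb" using MPO OMP by blast
  show ?thesis
  proof (intro conjI exI)
    show "alpha_prime_ring R \<alpha>" by (rule ap)
    show "0 < n" by (rule n(1))
    show "primeideal Q R" by (rule MPp[OF QMP])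
    show "inj_on (\<lambda>i. (\<alpha> ^^ i) ` Q) {..<n}" using finj unfolding f_def .
    show "{P. minimal_prime R P} = (\<lambda>i. (\<alpha> ^^ i) ` Q) ` {..<n}"
      using MPeq unfolding MP_def Orb_def f_def .
    show "(\<alpha> ^^ n) ` Q = Q" using n(2) unfolding f_def .
    have "(\<Inter>i\<in>{..<n}. (\<alpha> ^^ i) ` Q) = N" unfolding N_def MPeq Orb_def f_def ..
    then show "(\<Inter>i\<in>{..<n}. (\<alpha> ^^ i) ` Q) = {\<zero>}" using N0 by simp
  qed
qed

end

locale rmod =
  fixes T :: "('c, 'b) ring_scheme" (structure) and M :: "'m set"
    and madd :: "'m \<Rightarrow> 'm \<Rightarrow> 'm" and mzero :: 'm and act :: "'m \<Rightarrow> 'c \<Rightarrow> 'm"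
  assumes rm: "right_module T M madd mzero act"
begin

abbreviation G where "G \<equiv> \<lparr>carrier = M, mult = madd, one = mzero\<rparr>"

lemma ringT: "ring T" using rm unfolding right_module_def by blast
lemma cg: "comm_group G" using rm unfolding right_module_def by blast

sublocale T: ring T by (rule ringT)
sublocale G: comm_group G by (rule cg)

lemma madd_closed[simp]: "x \<in> M \<Longrightarrow> y \<in> M \<Longrightarrow> madd x y \<in> M"
  using G.m_closed[of x y] by simp
lemma mzero_closed[simp]: "mzero \<in> M" using G.one_closed by simp
lemma madd_assoc: "x \<in> M \<Longrightarrow> y \<in> M \<Longrightarrow> z \<in> M \<Longrightarrow> madd (madd x y) z = madd x (madd y z)"
  using G.m_assoc[of x y z] by simp
lemma madd_comm: "x \<in> M \<Longrightarrow> y \<in> M \<Longrightarrow> madd x y = madd y x"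
  using G.m_comm[of x y] by simp
lemma madd_lzero[simp]: "x \<in> M \<Longrightarrow> madd mzero x = x" using G.l_one[of x] by simp
lemma madd_rzero[simp]: "x \<in> M \<Longrightarrow> madd x mzero = x" using G.r_one[of x] by simp

lemma act_closed[simp]: "m \<in> M \<Longrightarrow> r \<in> carrier T \<Longrightarrow> act m r \<in> M"
  using rm unfolding right_module_def by blast
lemma act_add_r: "m \<in> M \<Longrightarrow> r \<in> carrier T \<Longrightarrow> s \<in> carrier T \<Longrightarrow> act m (r \<oplus> s) = madd (act m r) (act m s)"
  using rm unfolding right_module_def by blast
lemma act_add_l: "m \<in> M \<Longrightarrow> m' \<in> M \<Longrightarrow> r \<in> carrier T \<Longrightarrow> act (madd m m') r = madd (act m r) (act m' r)"
  using rm unfolding right_module_def by blast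
lemma act_mult: "m \<in> M \<Longrightarrow> r \<in> carrier T \<Longrightarrow> s \<in> carrier T \<Longrightarrow> act m (r \<otimes> s) = act (act m r) s"
  using rm unfolding right_module_def by blast
lemma act_one[simp]: "m \<in> M \<Longrightarrow> act m \<one> = m"
  using rm unfolding right_module_def by blast

lemma act_zero_r[simp]: assumes m: "m \<in> M" shows "act m \<zero> = mzero"
proof -
  have "madd (act m \<zero>) (act m \<zero>) = act m \<zero>" using act_add_r[OF m, of \<zero> \<zero>] by simp
  then show ?thesis using G.l_cancel_one[of "act m \<zero>" "act m \<zero>"] m by simp
qed

lemma act_zero_l[simp]: assumes r: "r \<in> carrier T" shows "act mzero r = mzero"
proof -
  have "madd (act mzero r) (act mzero r) = act mzero r" using act_add_l[of mzero mzero r] r by simp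
  then show ?thesis using G.l_cancel_one[of "act mzero r" "act mzero r"] r by simp
qed

lemma act_neg: assumes m: "m \<in> M" and r: "r \<in> carrier T"
  shows "act m (\<ominus> r) = inv\<^bsub>G\<^esub> (act m r)"
proof -
  have "madd (act m (\<ominus> r)) (act m r) = act m (\<ominus> r \<oplus> r)" using act_add_r[OF m] r by simp
  also have "\<dots> = mzero" using m r by (simp add: T.l_neg)
  finally have "act m (\<ominus> r) \<otimes>\<^bsub>G\<^esub> act m r = \<one>\<^bsub>G\<^esub>" by simp
  then show ?thesis using G.inv_equality m r by simp
qed

lemma cyclic_sub:
  assumes x: "x \<in> M"
  shows "submodule T {act x r | r. r \<in> carrier T} M madd mzero act"
  unfolding submodule_def
proof (intro conjI ballI)
  let ?C = "{act x r | r. r \<in> carrier T}"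
  show "subgroup ?C G"
  proof
    show "?C \<subseteq> carrier G" using x by auto
    have "mzero = act x \<zero>" using x by simp
    then show "\<one>\<^bsub>G\<^esub> \<in> ?C" by auto
    fix a b assume a: "a \<in> ?C" and b: "b \<in> ?C"
    then obtain r s where rs: "r \<in> carrier T" "s \<in> carrier T" "a = act x r" "b = act x s" by blast
    then have "madd a b = act x (r \<oplus> s)" using act_add_r[OF x] by simp
    then show "a \<otimes>\<^bsub>G\<^esub> b \<in> ?C" using rs by auto
  next
    fix a assume a: "a \<in> {act x r | r. r \<in> carrier T}"
    then obtain r where r: "r \<in> carrier T" "a = act x r" by blast
    then have "inv\<^bsub>G\<^esub> a = act x (\<ominus> r)" using act_neg[OF x] by simp
    then show "inv\<^bsub>G\<^esub> a \<in> {act x r | r. r \<in> carrier T}" using r by auto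
  qed
next
  fix m r assume "m \<in> {act x r | r. r \<in> carrier T}" and r: "r \<in> carrier T"
  then obtain s where s: "s \<in> carrier T" "m = act x s" by blast
  then have "act m r = act x (s \<otimes> r)" using act_mult[OF x] r by simp
  then show "act m r \<in> {act x r | r. r \<in> carrier T}" using s r by auto
qed

lemma sub_contains_zero: "submodule T N M madd mzero act \<Longrightarrow> mzero \<in> N"
  unfolding submodule_def using subgroup.one_closed by fastforce

lemma simple_cyclic:
  assumes s: "simple_right_module T M madd mzero act" and x: "x \<in> M" "x \<noteq> mzero" and y: "y \<in> M"
  shows "\<exists>r\<in>carrier T. y = act x r"
proof -
  let ?C = "{act x r | r. r \<in> carrier T}"
  have "x \<in> ?C" using x by (auto intro: exI[of _ \<one>])
  then have "?C \<noteq> {mzero}" using x by blast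
  then have "?C = M" using s cyclic_sub[OF x(1)] unfolding simple_right_module_def by blast
  then show ?thesis using y by blast
qed

end


lemma primitive_transport:
  fixes T :: "('c, 'b) ring_scheme" and M :: "'m set"
  assumes s: "simple_right_module T M madd mzero act"
    and f: "faithful_right_module T M madd mzero act"
  shows "primitive T"
proof -
  have rmd: "right_module T M madd mzero act" using s unfolding simple_right_module_def by blast
  interpret rmod T M madd mzero act by (rule rmod.intro[OF rmd])
  have Mne: "M \<noteq> {mzero}" using s unfolding simple_right_module_def by blast
  obtain m0 where m0: "m0 \<in> M" "m0 \<noteq> mzero" using Mne mzero_closed by blast
  define h where "h x = {r \<in> carrier T. act m0 r = x}" for x
  define g where "g A = act m0 (SOME r. r \<in> A)" for A :: "'c set"
  have gh: "g (h x) = x" if x: "x \<in> M" for x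
  proof -
    obtain r where r: "r \<in> carrier T" "x = act m0 r" using simple_cyclic[OF s m0 x] by blast
    then have "\<exists>r. r \<in> h x" unfolding h_def by blast
    then have "(SOME r. r \<in> h x) \<in> h x" by (rule someI_ex)
    then show ?thesis unfolding g_def h_def by simp
  qed
  have hinj: "x = y" if "x \<in> M" "y \<in> M" "h x = h y" for x y using gh that by metis
  define M' where "M' = h ` M"
  define madd' where "madd' A B = h (madd (g A) (g B))" for A B
  define mzero' where "mzero' = h mzero"
  define act' where "act' A r = h (act (g A) r)" for A r
  have gM: "g A \<in> M" if "A \<in> M'" for A using that gh unfolding M'_def by auto
  have hg: "h (g A) = A" if "A \<in> M'" for A using that gh unfolding M'_def by auto
  have hM: "h x \<in> M'" if "x \<in> M" for x using that unfolding M'_def by blast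
  define G' where "G' = \<lparr>carrier = M', mult = madd', one = mzero'\<rparr>"
  have cg': "comm_group G'"
    unfolding G'_def
  proof (rule comm_groupI, simp_all)
    fix x y assume "x \<in> M'" "y \<in> M'"
    then show "madd' x y \<in> M'" unfolding madd'_def using gM hM by simp
  next
    show "mzero' \<in> M'" unfolding mzero'_def using hM by simp
  next
    fix x y z assume xyz: "x \<in> M'" "y \<in> M'" "z \<in> M'"
    then show "madd' (madd' x y) z = madd' x (madd' y z)"
      unfolding madd'_def using gM gh madd_assoc by simp
  next
    fix x y assume "x \<in> M'" "y \<in> M'"
    then show "madd' x y = madd' y x" unfolding madd'_def using gM madd_comm by simp
  next
    fix x assume "x \<in> M'"
    then show "madd' mzero' x = x" unfolding madd'_def mzero'_def using gM gh hg by simp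
  next
    fix x assume x: "x \<in> M'"
    have i: "inv\<^bsub>G\<^esub> (g x) \<in> M" using G.inv_closed[of "g x"] gM[OF x] by simp
    have "madd (inv\<^bsub>G\<^esub> (g x)) (g x) = mzero" using G.l_inv[of "g x"] gM[OF x] by simp
    then have "madd' (h (inv\<^bsub>G\<^esub> (g x))) x = mzero'" unfolding madd'_def mzero'_def using gh[OF i] by simp
    then show "\<exists>y\<in>M'. madd' y x = mzero'" using hM[OF i] by blast
  qed
  interpret G': comm_group G' by (rule cg')
  have rm': "right_module T M' madd' mzero' act'"
    unfolding right_module_def
  proof (intro conjI ballI)
    show "ring T" by (rule ringT)
    show "comm_group \<lparr>carrier = M', mult = madd', one = mzero'\<rparr>" using cg' unfolding G'_def .
  next
    fix m r assume "m \<in> M'" "r \<in> carrier T"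
    then show "act' m r \<in> M'" unfolding act'_def using gM hM by simp
  next
    fix m r s assume "m \<in> M'" "r \<in> carrier T" "s \<in> carrier T"
    then show "act' m (r \<oplus>\<^bsub>T\<^esub> s) = madd' (act' m r) (act' m s)"
      unfolding act'_def madd'_def using gM gh act_add_r by simp
  next
    fix m m' r assume "m \<in> M'" "m' \<in> M'" "r \<in> carrier T"
    then show "act' (madd' m m') r = madd' (act' m r) (act' m' r)"
      unfolding act'_def madd'_def using gM gh act_add_l by simp
  next
    fix m r s assume "m \<in> M'" "r \<in> carrier T" "s \<in> carrier T"
    then show "act' m (r \<otimes>\<^bsub>T\<^esub> s) = act' (act' m r) s"
      unfolding act'_def using gM gh act_mult by simp
  next
    fix m assume "m \<in> M'"
    then show "act' m \<one>\<^bsub>T\<^esub> = m" unfolding act'_def using gM hg by simp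
  qed
  have inv': "inv\<^bsub>G'\<^esub> A = h (inv\<^bsub>G\<^esub> (g A))" if A: "A \<in> M'" for A
  proof -
    have i: "inv\<^bsub>G\<^esub> (g A) \<in> M" using G.inv_closed[of "g A"] gM[OF A] by simp
    have "madd (inv\<^bsub>G\<^esub> (g A)) (g A) = mzero" using G.l_inv[of "g A"] gM[OF A] by simp
    then have "madd' (h (inv\<^bsub>G\<^esub> (g A))) A = mzero'" unfolding madd'_def mzero'_def using gh[OF i] by simp
    then have eq: "h (inv\<^bsub>G\<^esub> (g A)) \<otimes>\<^bsub>G'\<^esub> A = \<one>\<^bsub>G'\<^esub>" unfolding G'_def by simp
    have c1: "A \<in> carrier G'" using A unfolding G'_def by simp
    have c2: "h (inv\<^bsub>G\<^esub> (g A)) \<in> carrier G'" using hM[OF i] unfolding G'_def by simp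
    show ?thesis by (rule G'.inv_equality[OF eq c1 c2])
  qed
  have simple': "simple_right_module T M' madd' mzero' act'"
    unfolding simple_right_module_def
  proof (intro conjI allI impI)
    show "right_module T M' madd' mzero' act'" by (rule rm')
    obtain y where y: "y \<in> M" "y \<noteq> mzero" using m0 by blast
    have "h y \<noteq> mzero'" unfolding mzero'_def using hinj y mzero_closed by blast
    then show "M' \<noteq> {mzero'}" using hM[OF y(1)] by blast
  next
    fix N' assume N': "submodule T N' M' madd' mzero' act'"
    have sg: "subgroup N' G'" using N' unfolding submodule_def G'_def by blast
    have Nact: "\<And>m r. m \<in> N' \<Longrightarrow> r \<in> carrier T \<Longrightarrow> act' m r \<in> N'" using N' unfolding submodule_def by blast
    have NM: "N' \<subseteq> M'" using subgroup.subset[OF sg] unfolding G'_def by simp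
    have "submodule T (g ` N') M madd mzero act"
      unfolding submodule_def
    proof (intro conjI ballI)
      show "subgroup (g ` N') G"
      proof
        show "g ` N' \<subseteq> carrier G" using NM gM by auto
        have "mzero' \<in> N'" using subgroup.one_closed[OF sg] unfolding G'_def by simp
        moreover have "g mzero' = mzero" unfolding mzero'_def using gh by simp
        ultimately show "\<one>\<^bsub>G\<^esub> \<in> g ` N'" by force
      next
        fix a b assume "a \<in> g ` N'" "b \<in> g ` N'"
        then obtain A B where AB: "A \<in> N'" "B \<in> N'" "a = g A" "b = g B" by blast
        have "madd' A B \<in> N'" using subgroup.m_closed[OF sg AB(1,2)] unfolding G'_def by simp
        have AM: "A \<in> M'" "B \<in> M'" using AB NM by blast+
        have "g (madd' A B) = madd a b" unfolding madd'_def AB(3,4)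
          by (rule gh[OF madd_closed[OF gM[OF AM(1)] gM[OF AM(2)]]])
        moreover note \<open>madd' A B \<in> N'\<close>
        ultimately show "a \<otimes>\<^bsub>G\<^esub> b \<in> g ` N'" by force
      next
        fix a assume "a \<in> g ` N'"
        then obtain A where A: "A \<in> N'" "a = g A" by blast
        have AM: "A \<in> M'" using A NM by blast
        have "inv\<^bsub>G'\<^esub> A \<in> N'" using subgroup.m_inv_closed[OF sg A(1)] .
        moreover have "g (inv\<^bsub>G'\<^esub> A) = inv\<^bsub>G\<^esub> a"
          using inv'[OF AM] A gh G.inv_closed[of "g A"] gM[OF AM] by simp
        ultimately show "inv\<^bsub>G\<^esub> a \<in> g ` N'" by force
      qed
    next
      fix a r assume "a \<in> g ` N'" "r \<in> carrier T"
      then obtain A where A: "A \<in> N'" "a = g A" "r \<in> carrier T" by blast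
      have "act' A r \<in> N'" using Nact A by blast
      moreover have "g (act' A r) = act a r" unfolding act'_def A(2)
        using A NM by (intro gh act_closed gM) auto
      ultimately show "act a r \<in> g ` N'" by force
    qed
    then have "g ` N' = {mzero} \<or> g ` N' = M" using s unfolding simple_right_module_def by blast
    moreover have "h ` g ` N' = N'" using hg NM by force
    ultimately show "N' = {mzero'} \<or> N' = M'" unfolding mzero'_def M'_def by force
  qed
  have faith': "faithful_right_module T M' madd' mzero' act'"
    unfolding faithful_right_module_def
  proof (intro conjI ballI impI)
    show "right_module T M' madd' mzero' act'" by (rule rm')
    fix r assume r: "r \<in> carrier T" and z: "\<forall>m\<in>M'. act' m r = mzero'"
    have "act x r = mzero" if x: "x \<in> M" for x
    proof -
      have "act' (h x) r = mzero'" using z hM[OF x] by blast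
      then have "h (act x r) = h mzero" unfolding act'_def mzero'_def using gh[OF x] by simp
      then show ?thesis using hinj r x by simp
    qed
    then show "r = \<zero>\<^bsub>T\<^esub>" using f r unfolding faithful_right_module_def by blast
  qed
  show ?thesis unfolding primitive_def using simple' faith' by blast
qed


locale partB = skewctx +
  fixes n :: nat and Q :: "'a set"
  assumes npos: "0 < n" and Qp: "primeideal Q R"
    and finj: "inj_on (\<lambda>i. (\<alpha> ^^ i) ` Q) {..<n}"
    and MPeq: "{P. minimal_prime R P} = (\<lambda>i. (\<alpha> ^^ i) ` Q) ` {..<n}"
    and Qn: "(\<alpha> ^^ n) ` Q = Q"
    and inter0: "(\<Inter>i\<in>{..<n}. (\<alpha> ^^ i) ` Q) = {\<zero>}"
begin

definition f :: "nat \<Rightarrow> 'a set" where "f i = (\<alpha> ^^ i) ` Q"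

lemma Qi: "ideal Q R" using Qp by (simp add: primeideal_def)
lemma Qc: "Q \<subseteq> carrier R" using prime_sub[OF Qp] .
lemma zQ: "\<zero> \<in> Q" using additive_subgroup.zero_closed[OF ideal.axioms(1)[OF Qi]] .

lemma f0: "f 0 = Q" unfolding f_def by simp
lemma fadd: "f (i + j) = (\<alpha> ^^ i) ` (f j)" unfolding f_def by (rule pow_img_add)
lemma fper: "f (x + n) = f x" using fadd[of x n] Qn unfolding f_def by simp
lemma fper2: "f (x + m * n) = f x"
proof (induction m)
  case (Suc m)
  have "x + Suc m * n = (x + m * n) + n" by simp
  then show ?case using fper[of "x + m * n"] Suc by (simp only:)
qed simp
lemma fmult: "f (m * n) = Q" using fper2[of 0 m] f0 by simp

lemma fMP: "i < n \<Longrightarrow> minimal_prime R (f i)" using MPeq unfolding f_def by blast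
lemma fprime: "i < n \<Longrightarrow> primeideal (f i) R" using fMP unfolding minimal_prime_def by blast
lemma fideal: "i < n \<Longrightarrow> ideal (f i) R" using fprime by (simp add: primeideal_def)
lemma fc: "f i \<subseteq> carrier R" unfolding f_def using Qc by auto

lemma Qstab: assumes q: "q \<in> Q" and d: "n dvd k" shows "(\<alpha> ^^ k) q \<in> Q"
proof -
  obtain m where k: "k = m * n" using d by (metis dvd_def mult.commute)
  have "(\<alpha> ^^ k) q \<in> f k" unfolding f_def using q by blast
  then show ?thesis using fmult k by simp
qed

definition I0 :: "'a set" where "I0 = {r \<in> carrier R. \<forall>j. 0 < j \<and> j < n \<longrightarrow> r \<in> f j}"

lemma I0_exists: "\<exists>r0. r0 \<in> I0 \<and> r0 \<notin> Q"
proof (rule ccontr)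
  assume "\<not> ?thesis"
  then have sub: "I0 \<subseteq> Q" by blast
  show False
  proof (cases "n = 1")
    case True
    then have "I0 = carrier R" unfolding I0_def by auto
    then show False using sub Qc primeideal.I_notcarr[OF Qp] by blast
  next
    case False
    then have n1: "1 < n" using npos by simp
    define J where "J = f ` {1..<n}"
    have Jne: "J \<noteq> {}" unfolding J_def using n1 by simp
    have Jfin: "finite J" unfolding J_def by simp
    have Jid: "\<And>X. X \<in> J \<Longrightarrow> ideal X R" unfolding J_def using fideal by auto
    have "\<Inter>J \<subseteq> I0"
    proof
      fix x assume x: "x \<in> \<Inter>J"
      have "x \<in> f 1" using x n1 unfolding J_def by auto
      then have "x \<in> carrier R" using fc by blast
      moreover have "\<forall>j. 0 < j \<and> j < n \<longrightarrow> x \<in> f j" using x unfolding J_def by auto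
      ultimately show "x \<in> I0" unfolding I0_def by blast
    qed
    then have "\<Inter>J \<subseteq> Q" using sub by blast
    then obtain X where X: "X \<in> J" "X \<subseteq> Q" using prime_contains_inter[OF Jfin Jne Jid Qp] by blast
    then obtain j where j: "j \<in> {1..<n}" "X = f j" unfolding J_def by blast
    have "f j = Q"
      using fMP[of 0] f0 fprime[of j] j X npos unfolding minimal_prime_def by auto
    then have "f j = f 0" using f0 by simp
    then have "j = 0" using finj j npos unfolding f_def inj_on_def by auto
    then show False using j by simp
  qed
qed

lemma I0_carrier: "r \<in> I0 \<Longrightarrow> r \<in> carrier R" unfolding I0_def by blast

lemma I0_Q: assumes r: "r \<in> I0" and q: "q \<in> Q" shows "r \<otimes> q = \<zero>"
proof -
  have rc: "r \<in> carrier R" using I0_carrier[OF r] .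
  have qc: "q \<in> carrier R" using q Qc by blast
  have "r \<otimes> q \<in> f i" if i: "i < n" for i
  proof (cases "i = 0")
    case True
    then show ?thesis using ideal.I_l_closed[OF Qi q rc] f0 by simp
  next
    case False
    then have "r \<in> f i" using r i unfolding I0_def by blast
    then show ?thesis using ideal.I_r_closed[OF fideal[OF i] _ qc] by blast
  qed
  then have "r \<otimes> q \<in> (\<Inter>i\<in>{..<n}. (\<alpha> ^^ i) ` Q)" unfolding f_def by blast
  then show ?thesis using inter0 by blast
qed

lemma I0_shift: assumes r: "r \<in> I0" and k: "\<not> n dvd k" shows "(\<alpha> ^^ k) r \<in> Q"
proof -
  define j where "j = k mod n"
  have j: "0 < j" "j < n" using k npos unfolding j_def by (auto simp: dvd_eq_mod_eq_0)
  have "r \<in> f (n - j)" using r j unfolding I0_def by auto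
  then have "(\<alpha> ^^ k) r \<in> (\<alpha> ^^ k) ` f (n - j)" by blast
  also have "\<dots> = f (k + (n - j))" using fadd by simp
  also have "k + (n - j) = 0 + (k div n + 1) * n"
  proof -
    define q where "q = k div n"
    have kq: "k = q * n + j" unfolding q_def j_def by simp
    show ?thesis unfolding kq q_def[symmetric] using j(2) by (simp add: algebra_simps)
  qed
  also have "f \<dots> = Q" using fmult[of "k div n + 1"] by simp
  finally show ?thesis .
qed

end

lemma ring_transfer:
  fixes A :: "('a, 'c) ring_scheme" and B :: "('d, 'e) ring_scheme" and \<pi> :: "'a \<Rightarrow> 'd"
  assumes rA: "ring A" and CA: "C \<subseteq> carrier A"
    and cadd: "\<And>x y. x \<in> C \<Longrightarrow> y \<in> C \<Longrightarrow> x \<oplus>\<^bsub>A\<^esub> y \<in> C"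
    and cmul: "\<And>x y. x \<in> C \<Longrightarrow> y \<in> C \<Longrightarrow> x \<otimes>\<^bsub>A\<^esub> y \<in> C"
    and cneg: "\<And>x. x \<in> C \<Longrightarrow> \<ominus>\<^bsub>A\<^esub> x \<in> C"
    and c0: "\<zero>\<^bsub>A\<^esub> \<in> C" and c1: "\<one>\<^bsub>A\<^esub> \<in> C"
    and img: "\<pi> ` C = carrier B"
    and padd: "\<And>x y. x \<in> C \<Longrightarrow> y \<in> C \<Longrightarrow> \<pi> (x \<oplus>\<^bsub>A\<^esub> y) = \<pi> x \<oplus>\<^bsub>B\<^esub> \<pi> y"
    and pmul: "\<And>x y. x \<in> C \<Longrightarrow> y \<in> C \<Longrightarrow> \<pi> (x \<otimes>\<^bsub>A\<^esub> y) = \<pi> x \<otimes>\<^bsub>B\<^esub> \<pi> y"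
    and p0: "\<pi> \<zero>\<^bsub>A\<^esub> = \<zero>\<^bsub>B\<^esub>" and p1: "\<pi> \<one>\<^bsub>A\<^esub> = \<one>\<^bsub>B\<^esub>"
  shows "ring B"
proof -
  interpret A: ring A by (rule rA)
  have pre: "\<exists>x\<in>C. b = \<pi> x" if "b \<in> carrier B" for b using that img by blast
  have inB: "\<pi> x \<in> carrier B" if "x \<in> C" for x using that img by blast
  have cc: "x \<in> carrier A" if "x \<in> C" for x using that CA by blast
  show ?thesis
  proof (rule ringI)
    show "abelian_group B"
    proof (rule abelian_groupI)
      fix a b assume "a \<in> carrier B" "b \<in> carrier B"
      then obtain x y where "x \<in> C" "y \<in> C" "a = \<pi> x" "b = \<pi> y" using pre by metis
      then show "a \<oplus>\<^bsub>B\<^esub> b \<in> carrier B" using padd[symmetric] inB cadd by metis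
    next
      show "\<zero>\<^bsub>B\<^esub> \<in> carrier B" using p0 inB[OF c0] by simp
    next
      fix a b c assume "a \<in> carrier B" "b \<in> carrier B" "c \<in> carrier B"
      then obtain x y z where xyz: "x \<in> C" "y \<in> C" "z \<in> C" "a = \<pi> x" "b = \<pi> y" "c = \<pi> z" using pre by metis
      have "a \<oplus>\<^bsub>B\<^esub> b \<oplus>\<^bsub>B\<^esub> c = \<pi> ((x \<oplus>\<^bsub>A\<^esub> y) \<oplus>\<^bsub>A\<^esub> z)" using xyz padd cadd by simp
      also have "(x \<oplus>\<^bsub>A\<^esub> y) \<oplus>\<^bsub>A\<^esub> z = x \<oplus>\<^bsub>A\<^esub> (y \<oplus>\<^bsub>A\<^esub> z)" using xyz cc A.a_assoc by simp
      also have "\<pi> \<dots> = a \<oplus>\<^bsub>B\<^esub> (b \<oplus>\<^bsub>B\<^esub> c)" using xyz padd cadd by simp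
      finally show "a \<oplus>\<^bsub>B\<^esub> b \<oplus>\<^bsub>B\<^esub> c = a \<oplus>\<^bsub>B\<^esub> (b \<oplus>\<^bsub>B\<^esub> c)" .
    next
      fix a b assume "a \<in> carrier B" "b \<in> carrier B"
      then obtain x y where xy: "x \<in> C" "y \<in> C" "a = \<pi> x" "b = \<pi> y" using pre by metis
      have "a \<oplus>\<^bsub>B\<^esub> b = \<pi> (x \<oplus>\<^bsub>A\<^esub> y)" using xy padd by simp
      also have "x \<oplus>\<^bsub>A\<^esub> y = y \<oplus>\<^bsub>A\<^esub> x" using xy cc A.a_comm by simp
      also have "\<pi> \<dots> = b \<oplus>\<^bsub>B\<^esub> a" using xy padd by simp
      finally show "a \<oplus>\<^bsub>B\<^esub> b = b \<oplus>\<^bsub>B\<^esub> a" .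
    next
      fix a assume "a \<in> carrier B"
      then obtain x where x: "x \<in> C" "a = \<pi> x" using pre by metis
      have "\<zero>\<^bsub>B\<^esub> \<oplus>\<^bsub>B\<^esub> a = \<pi> (\<zero>\<^bsub>A\<^esub> \<oplus>\<^bsub>A\<^esub> x)" using x padd c0 p0 by simp
      then show "\<zero>\<^bsub>B\<^esub> \<oplus>\<^bsub>B\<^esub> a = a" using x cc by simp
    next
      fix a assume "a \<in> carrier B"
      then obtain x where x: "x \<in> C" "a = \<pi> x" using pre by metis
      have "\<pi> (\<ominus>\<^bsub>A\<^esub> x) \<oplus>\<^bsub>B\<^esub> a = \<pi> (\<ominus>\<^bsub>A\<^esub> x \<oplus>\<^bsub>A\<^esub> x)" using x padd cneg by simp
      also have "\<ominus>\<^bsub>A\<^esub> x \<oplus>\<^bsub>A\<^esub> x = \<zero>\<^bsub>A\<^esub>" using x cc A.l_neg by simp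
      finally have "\<pi> (\<ominus>\<^bsub>A\<^esub> x) \<oplus>\<^bsub>B\<^esub> a = \<zero>\<^bsub>B\<^esub>" using p0 by simp
      then show "\<exists>y\<in>carrier B. y \<oplus>\<^bsub>B\<^esub> a = \<zero>\<^bsub>B\<^esub>" using inB[OF cneg[OF x(1)]] by blast
    qed
  next
    show "monoid B"
    proof (rule monoidI)
      fix a b assume "a \<in> carrier B" "b \<in> carrier B"
      then obtain x y where "x \<in> C" "y \<in> C" "a = \<pi> x" "b = \<pi> y" using pre by metis
      then show "a \<otimes>\<^bsub>B\<^esub> b \<in> carrier B" using pmul[symmetric] inB cmul by metis
    next
      show "\<one>\<^bsub>B\<^esub> \<in> carrier B" using p1 inB[OF c1] by simp
    next
      fix a b c assume "a \<in> carrier B" "b \<in> carrier B" "c \<in> carrier B"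
      then obtain x y z where xyz: "x \<in> C" "y \<in> C" "z \<in> C" "a = \<pi> x" "b = \<pi> y" "c = \<pi> z" using pre by metis
      have "a \<otimes>\<^bsub>B\<^esub> b \<otimes>\<^bsub>B\<^esub> c = \<pi> ((x \<otimes>\<^bsub>A\<^esub> y) \<otimes>\<^bsub>A\<^esub> z)" using xyz pmul cmul by simp
      also have "(x \<otimes>\<^bsub>A\<^esub> y) \<otimes>\<^bsub>A\<^esub> z = x \<otimes>\<^bsub>A\<^esub> (y \<otimes>\<^bsub>A\<^esub> z)" using xyz cc A.m_assoc by simp
      also have "\<pi> \<dots> = a \<otimes>\<^bsub>B\<^esub> (b \<otimes>\<^bsub>B\<^esub> c)" using xyz pmul cmul by simp
      finally show "a \<otimes>\<^bsub>B\<^esub> b \<otimes>\<^bsub>B\<^esub> c = a \<otimes>\<^bsub>B\<^esub> (b \<otimes>\<^bsub>B\<^esub> c)" .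
    next
      fix a assume "a \<in> carrier B"
      then obtain x where x: "x \<in> C" "a = \<pi> x" using pre by metis
      have "\<one>\<^bsub>B\<^esub> \<otimes>\<^bsub>B\<^esub> a = \<pi> (\<one>\<^bsub>A\<^esub> \<otimes>\<^bsub>A\<^esub> x)" using x pmul c1 p1 by simp
      then show "\<one>\<^bsub>B\<^esub> \<otimes>\<^bsub>B\<^esub> a = a" using x cc by simp
    next
      fix a assume "a \<in> carrier B"
      then obtain x where x: "x \<in> C" "a = \<pi> x" using pre by metis
      have "a \<otimes>\<^bsub>B\<^esub> \<one>\<^bsub>B\<^esub> = \<pi> (x \<otimes>\<^bsub>A\<^esub> \<one>\<^bsub>A\<^esub>)" using x pmul c1 p1 by simp
      then show "a \<otimes>\<^bsub>B\<^esub> \<one>\<^bsub>B\<^esub> = a" using x cc by simp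
    qed
  next
    fix a b c assume "a \<in> carrier B" "b \<in> carrier B" "c \<in> carrier B"
    then obtain x y z where xyz: "x \<in> C" "y \<in> C" "z \<in> C" "a = \<pi> x" "b = \<pi> y" "c = \<pi> z" using pre by metis
    have "(a \<oplus>\<^bsub>B\<^esub> b) \<otimes>\<^bsub>B\<^esub> c = \<pi> ((x \<oplus>\<^bsub>A\<^esub> y) \<otimes>\<^bsub>A\<^esub> z)" using xyz pmul padd cadd by simp
    also have "(x \<oplus>\<^bsub>A\<^esub> y) \<otimes>\<^bsub>A\<^esub> z = x \<otimes>\<^bsub>A\<^esub> z \<oplus>\<^bsub>A\<^esub> y \<otimes>\<^bsub>A\<^esub> z" using xyz cc A.l_distr by simp
    also have "\<pi> \<dots> = a \<otimes>\<^bsub>B\<^esub> c \<oplus>\<^bsub>B\<^esub> b \<otimes>\<^bsub>B\<^esub> c" using xyz pmul padd cmul by simp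
    finally show "(a \<oplus>\<^bsub>B\<^esub> b) \<otimes>\<^bsub>B\<^esub> c = a \<otimes>\<^bsub>B\<^esub> c \<oplus>\<^bsub>B\<^esub> b \<otimes>\<^bsub>B\<^esub> c" .
  next
    fix a b c assume "a \<in> carrier B" "b \<in> carrier B" "c \<in> carrier B"
    then obtain x y z where xyz: "x \<in> C" "y \<in> C" "z \<in> C" "a = \<pi> x" "b = \<pi> y" "c = \<pi> z" using pre by metis
    have "c \<otimes>\<^bsub>B\<^esub> (a \<oplus>\<^bsub>B\<^esub> b) = \<pi> (z \<otimes>\<^bsub>A\<^esub> (x \<oplus>\<^bsub>A\<^esub> y))" using xyz pmul padd cadd by simp
    also have "z \<otimes>\<^bsub>A\<^esub> (x \<oplus>\<^bsub>A\<^esub> y) = z \<otimes>\<^bsub>A\<^esub> x \<oplus>\<^bsub>A\<^esub> z \<otimes>\<^bsub>A\<^esub> y" using xyz cc A.r_distr by simp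
    also have "\<pi> \<dots> = c \<otimes>\<^bsub>B\<^esub> a \<oplus>\<^bsub>B\<^esub> c \<otimes>\<^bsub>B\<^esub> b" using xyz pmul padd cmul by simp
    finally show "c \<otimes>\<^bsub>B\<^esub> (a \<oplus>\<^bsub>B\<^esub> b) = c \<otimes>\<^bsub>B\<^esub> a \<oplus>\<^bsub>B\<^esub> c \<otimes>\<^bsub>B\<^esub> b" .
  qed
qed


context partB begin

lemma RQ_cring: "cring (R Quot Q)" by (rule ideal.quotient_is_cring[OF Qi is_cring])
lemma canon: "((+>) Q) \<in> ring_hom R (R Quot Q)" by (rule ideal.rcos_ring_hom[OF Qi])
lemma canon_cring: "ring_hom_cring R (R Quot Q) ((+>) Q)"
  by (rule ring_hom_cringI[OF is_cring RQ_cring canon])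
lemma RQ_zero: "\<zero>\<^bsub>R Quot Q\<^esub> = Q" by (simp add: FactRing_def)
lemma RQ_one: "\<one>\<^bsub>R Quot Q\<^esub> = Q +> \<one>" by (simp add: FactRing_def)
lemma RQ_carrier: "carrier (R Quot Q) = a_rcosets Q" by (simp add: FactRing_def)

end

sublocale partB \<subseteq> QI: ideal Q R by (rule Qi)
sublocale partB \<subseteq> RQ: cring "R Quot Q" by (rule RQ_cring)
sublocale partB \<subseteq> H: ring_hom_cring R "R Quot Q" "(+>) Q" by (rule canon_cring)

context partB begin


lemma cos_zero: "Q +> \<zero> = Q" by (rule QI.a_rcos_const[OF zQ])
lemma cos_eq_Q: assumes a: "a \<in> carrier R" shows "Q +> a = Q \<longleftrightarrow> a \<in> Q"
proof
  assume "Q +> a = Q"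
  then show "a \<in> Q" using QI.a_rcos_self[OF a] by simp
next
  assume "a \<in> Q" then show "Q +> a = Q" by (rule QI.a_rcos_const)
qed
lemma cos_eq: assumes a: "a \<in> carrier R" and b: "b \<in> carrier R" and e: "Q +> a = Q +> b"
  shows "a \<ominus> b \<in> Q"
proof -
  have "a \<in> Q +> b" using QI.a_rcos_self[OF a] e by simp
  then obtain q where q: "q \<in> Q" "a = q \<oplus> b" unfolding a_r_coset_def' by blast
  have qc: "q \<in> carrier R" using q(1) Qc by blast
  have "a \<ominus> b = q" using q(2) qc b by (simp add: a_minus_def a_assoc r_neg)
  then show ?thesis using q(1) by simp
qed
lemma cos_add: "a \<in> carrier R \<Longrightarrow> b \<in> carrier R \<Longrightarrow> Q +> (a \<oplus> b) = (Q +> a) \<oplus>\<^bsub>R Quot Q\<^esub> (Q +> b)"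
  by (rule H.hom_add)
lemma cos_mult: "a \<in> carrier R \<Longrightarrow> b \<in> carrier R \<Longrightarrow> Q +> (a \<otimes> b) = (Q +> a) \<otimes>\<^bsub>R Quot Q\<^esub> (Q +> b)"
  by (rule H.hom_mult)
lemma cos_in: "a \<in> carrier R \<Longrightarrow> Q +> a \<in> carrier (R Quot Q)"
  by (rule H.hom_closed)

definition \<gamma> :: "'a set \<Rightarrow> 'a set" where "\<gamma> X = (\<alpha> ^^ n) ` X"

lemma gamma_cos: assumes x: "x \<in> carrier R" shows "\<gamma> (Q +> x) = Q +> (\<alpha> ^^ n) x"
proof (intro equalityI subsetI)
  fix y assume "y \<in> \<gamma> (Q +> x)"
  then obtain q where q: "q \<in> Q" "y = (\<alpha> ^^ n) (q \<oplus> x)" unfolding \<gamma>_def a_r_coset_def' by blast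
  have qc: "q \<in> carrier R" using q(1) Qc by blast
  have "y = (\<alpha> ^^ n) q \<oplus> (\<alpha> ^^ n) x" using q(2) qc x by simp
  moreover have "(\<alpha> ^^ n) q \<in> Q" using q(1) Qn by blast
  ultimately show "y \<in> Q +> (\<alpha> ^^ n) x" unfolding a_r_coset_def' by blast
next
  fix y assume "y \<in> Q +> (\<alpha> ^^ n) x"
  then obtain q where q: "q \<in> Q" "y = q \<oplus> (\<alpha> ^^ n) x" unfolding a_r_coset_def' by blast
  obtain p where p: "p \<in> Q" "q = (\<alpha> ^^ n) p" using q(1) Qn by blast
  have pc: "p \<in> carrier R" using p(1) Qc by blast
  have "y = (\<alpha> ^^ n) (p \<oplus> x)" using q(2) p(2) pc x by simp
  moreover have "p \<oplus> x \<in> Q +> x" using p(1) unfolding a_r_coset_def' by blast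
  ultimately show "y \<in> \<gamma> (Q +> x)" unfolding \<gamma>_def by blast
qed

lemma gamma_pow_cos: assumes x: "x \<in> carrier R" shows "(\<gamma> ^^ j) (Q +> x) = Q +> (\<alpha> ^^ (n * j)) x"
proof (induction j)
  case 0 then show ?case by simp
next
  case (Suc j)
  have "(\<gamma> ^^ Suc j) (Q +> x) = \<gamma> (Q +> (\<alpha> ^^ (n * j)) x)" using Suc by simp
  also have "\<dots> = Q +> (\<alpha> ^^ n) ((\<alpha> ^^ (n * j)) x)" using gamma_cos x by simp
  also have "(\<alpha> ^^ n) ((\<alpha> ^^ (n * j)) x) = (\<alpha> ^^ (n * Suc j)) x"
    by (simp add: funpow_add)
  finally show ?case .
qed

definition rep :: "'a set \<Rightarrow> 'a" where
  "rep X = (SOME x. x \<in> carrier R \<and> X = Q +> x \<and> (X = Q \<longrightarrow> x = \<zero>))"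

lemma rep_spec: assumes X: "X \<in> carrier (R Quot Q)"
  shows "rep X \<in> carrier R" "X = Q +> rep X" "X = Q \<Longrightarrow> rep X = \<zero>"
proof -
  have ex: "\<exists>x. x \<in> carrier R \<and> X = Q +> x \<and> (X = Q \<longrightarrow> x = \<zero>)"
  proof (cases "X = Q")
    case True then show ?thesis using cos_zero by (intro exI[of _ \<zero>]) auto
  next
    case False
    have "X \<in> a_rcosets Q" using X RQ_carrier by simp
    then obtain a where "a \<in> carrier R" "X = Q +> a" unfolding A_RCOSETS_def' by blast
    then show ?thesis using False by blast
  qed
  have "rep X \<in> carrier R \<and> X = Q +> rep X \<and> (X = Q \<longrightarrow> rep X = \<zero>)"
    unfolding rep_def by (rule someI_ex[OF ex])
  then show "rep X \<in> carrier R" "X = Q +> rep X" "X = Q \<Longrightarrow> rep X = \<zero>" by auto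
qed

abbreviation T' where "T' \<equiv> skew_poly (R Quot Q) \<gamma>"

lemma T'_carrier: "F \<in> carrier T' \<longleftrightarrow> (\<forall>i. F i \<in> carrier (R Quot Q)) \<and> finite {i. F i \<noteq> Q}"
  by (simp add: skew_poly_def RQ_zero)
lemma T'_mult: "(F \<otimes>\<^bsub>T'\<^esub> G) m = (\<Oplus>\<^bsub>R Quot Q\<^esub> i \<in> {..m}. F i \<otimes>\<^bsub>R Quot Q\<^esub> (\<gamma> ^^ i) (G (m - i)))"
  by (simp add: skew_poly_def)
lemma T'_add: "(F \<oplus>\<^bsub>T'\<^esub> G) k = F k \<oplus>\<^bsub>R Quot Q\<^esub> G k"
  by (simp add: skew_poly_def)
lemma T'_zero: "\<zero>\<^bsub>T'\<^esub> = (\<lambda>k. Q)"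
  by (simp add: skew_poly_def RQ_zero)
lemma T'_one: "\<one>\<^bsub>T'\<^esub> = (\<lambda>k. if k = 0 then \<one>\<^bsub>R Quot Q\<^esub> else Q)"
  unfolding skew_poly_def RQ_zero by simp

end

context partB begin

definition TT :: "(nat \<Rightarrow> 'a) set" where
  "TT = {t \<in> carrier S. \<forall>k. \<not> n dvd k \<longrightarrow> t k = \<zero>}"
definition \<pi> :: "(nat \<Rightarrow> 'a) \<Rightarrow> nat \<Rightarrow> 'a set" where
  "\<pi> t = (\<lambda>m. Q +> t (m * n))"
definition lift :: "(nat \<Rightarrow> 'a set) \<Rightarrow> nat \<Rightarrow> 'a" where
  "lift F = (\<lambda>k. if n dvd k then rep (F (k div n)) else \<zero>)"

lemma TT_sub: "TT \<subseteq> carrier S" unfolding TT_def by blast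
lemma TT_zero: "\<zero>\<^bsub>S\<^esub> \<in> TT"
  unfolding TT_def using ring.ring_simprules(2)[OF Sring] by (simp add: S_zero)
lemma TT_one: "\<one>\<^bsub>S\<^esub> \<in> TT"
proof -
  have "\<one>\<^bsub>S\<^esub> \<in> carrier S" using ring.ring_simprules(6)[OF Sring] .
  then show ?thesis unfolding TT_def by (auto simp: S_one)
qed
lemma TT_add: "x \<in> TT \<Longrightarrow> y \<in> TT \<Longrightarrow> x \<oplus>\<^bsub>S\<^esub> y \<in> TT"
  unfolding TT_def using ring.ring_simprules(1)[OF Sring] by (auto simp: S_add)
lemma TT_neg: "x \<in> TT \<Longrightarrow> \<ominus>\<^bsub>S\<^esub> x \<in> TT"
  unfolding TT_def using ring.ring_simprules(3)[OF Sring] by (auto simp: S_minus)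
lemma TT_mult: assumes x: "x \<in> TT" and y: "y \<in> TT" shows "x \<otimes>\<^bsub>S\<^esub> y \<in> TT"
proof -
  have xc: "x \<in> carrier S" and yc: "y \<in> carrier S" using x y TT_sub by blast+
  have "(x \<otimes>\<^bsub>S\<^esub> y) k = \<zero>" if k: "\<not> n dvd k" for k
  proof -
    have "(x \<otimes>\<^bsub>S\<^esub> y) k = (\<Oplus>i \<in> {..k}. \<zero>)"
      unfolding S_mult
    proof (rule finsum_cong'[OF refl])
      show "(\<lambda>i. \<zero>) \<in> {..k} \<rightarrow> carrier R" by simp
      fix i assume i: "i \<in> {..k}"
      show "x i \<otimes> (\<alpha> ^^ i) (y (k - i)) = \<zero>"
      proof (cases "n dvd i")
        case True
        have "\<not> n dvd (k - i)"
        proof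
          assume "n dvd (k - i)"
          then have "n dvd (i + (k - i))" using True by (rule dvd_add[rotated])
          then show False using k i by simp
        qed
        then have "y (k - i) = \<zero>" using y unfolding TT_def by blast
        then show ?thesis using S_coeff[OF xc] by simp
      next
        case False
        then have "x i = \<zero>" using x unfolding TT_def by blast
        then show ?thesis using S_coeff[OF yc] by simp
      qed
    qed
    then show ?thesis by simp
  qed
  moreover have "x \<otimes>\<^bsub>S\<^esub> y \<in> carrier S" by (rule ring.ring_simprules(5)[OF Sring xc yc])
  ultimately show ?thesis unfolding TT_def by simp
qed

lemma inj_mn: "inj (\<lambda>m::nat. m * n)"
proof (rule injI)
  fix x y :: nat assume "x * n = y * n" then show "x = y" using npos by simp
qed

lemma pi_carrier: assumes u: "u \<in> carrier S" shows "\<pi> u \<in> carrier T'"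
proof -
  have "{m. \<pi> u m \<noteq> Q} \<subseteq> (\<lambda>m. m * n) -` {k. u k \<noteq> \<zero>}"
    unfolding \<pi>_def using cos_zero by auto
  moreover have "finite {k. u k \<noteq> \<zero>}" using u by (simp add: S_carrier)
  then have "finite ((\<lambda>m. m * n) -` {k. u k \<noteq> \<zero>})"
    by (rule finite_vimageI[OF _ inj_mn])
  ultimately have "finite {m. \<pi> u m \<noteq> Q}" by (rule finite_subset)
  moreover have "\<pi> u m \<in> carrier (R Quot Q)" for m unfolding \<pi>_def using cos_in S_coeff[OF u] by simp
  ultimately show ?thesis unfolding T'_carrier by blast
qed

lemma pi_add: assumes "u \<in> carrier S" "v \<in> carrier S" shows "\<pi> (u \<oplus>\<^bsub>S\<^esub> v) = \<pi> u \<oplus>\<^bsub>T'\<^esub> \<pi> v"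
proof
  fix m show "\<pi> (u \<oplus>\<^bsub>S\<^esub> v) m = (\<pi> u \<oplus>\<^bsub>T'\<^esub> \<pi> v) m"
    unfolding \<pi>_def T'_add S_add using assms by (simp add: S_coeff cos_add)
qed

lemma pi_zero: "\<pi> \<zero>\<^bsub>S\<^esub> = \<zero>\<^bsub>T'\<^esub>"
  unfolding \<pi>_def T'_zero S_zero using cos_zero by simp

lemma pi_one: "\<pi> \<one>\<^bsub>S\<^esub> = \<one>\<^bsub>T'\<^esub>"
proof
  fix m
  show "\<pi> \<one>\<^bsub>S\<^esub> m = \<one>\<^bsub>T'\<^esub> m"
    unfolding \<pi>_def T'_one S_one using cos_zero npos by simp
qed

lemma pi_mult: assumes u: "u \<in> TT" and v: "v \<in> TT" shows "\<pi> (u \<otimes>\<^bsub>S\<^esub> v) = \<pi> u \<otimes>\<^bsub>T'\<^esub> \<pi> v"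
proof
  fix m
  have uc: "u \<in> carrier S" and vc: "v \<in> carrier S" using u v TT_sub by blast+
  define g where "g i = u i \<otimes> (\<alpha> ^^ i) (v (m * n - i))" for i
  have gc: "g \<in> B \<rightarrow> carrier R" for B unfolding g_def using S_coeff[OF uc] S_coeff[OF vc] by simp
  have sub: "(\<lambda>j. j * n) ` {..m} \<subseteq> {..m * n}" by auto
  have "(u \<otimes>\<^bsub>S\<^esub> v) (m * n) = (\<Oplus>i \<in> {..m * n}. g i)" unfolding S_mult g_def ..
  also have "\<dots> = (\<Oplus>i \<in> (\<lambda>j. j * n) ` {..m}. g i)"
  proof (rule add.finprod_mono_neutral_cong_right[OF _ sub])
    show "finite {..m * n}" by simp
    show "g \<in> {..m * n} \<rightarrow> carrier R" by (rule gc)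
    fix i assume i: "i \<in> {..m * n} - (\<lambda>j. j * n) ` {..m}"
    have "\<not> n dvd i"
    proof
      assume "n dvd i"
      then obtain j where j: "i = j * n" by (metis dvd_def mult.commute)
      then have "j \<le> m" using i npos by auto
      then show False using i j by blast
    qed
    then have "u i = \<zero>" using u unfolding TT_def by blast
    then show "g i = \<zero>" unfolding g_def using S_coeff[OF vc] by simp
  qed simp
  also have "\<dots> = (\<Oplus>j \<in> {..m}. g (j * n))"
    by (rule finsum_reindex[OF gc inj_on_subset[OF inj_mn subset_UNIV]])
  finally have eq1: "(u \<otimes>\<^bsub>S\<^esub> v) (m * n) = (\<Oplus>j \<in> {..m}. g (j * n))" .
  have "\<pi> (u \<otimes>\<^bsub>S\<^esub> v) m = Q +> (\<Oplus>j \<in> {..m}. g (j * n))" unfolding \<pi>_def eq1 ..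
  also have "\<dots> = (\<Oplus>\<^bsub>R Quot Q\<^esub> j \<in> {..m}. ((+>) Q \<circ> (\<lambda>j. g (j * n))) j)"
    by (rule H.hom_finsum) (use gc in auto)
  also have "\<dots> = (\<Oplus>\<^bsub>R Quot Q\<^esub> j \<in> {..m}. \<pi> u j \<otimes>\<^bsub>R Quot Q\<^esub> (\<gamma> ^^ j) (\<pi> v (m - j)))"
  proof (rule RQ.finsum_cong'[OF refl])
    show "(\<lambda>j. \<pi> u j \<otimes>\<^bsub>R Quot Q\<^esub> (\<gamma> ^^ j) (\<pi> v (m - j))) \<in> {..m} \<rightarrow> carrier (R Quot Q)"
      unfolding \<pi>_def using S_coeff[OF uc] S_coeff[OF vc] gamma_pow_cos cos_in by simp
    fix j assume j: "j \<in> {..m}"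
    have e: "m * n - j * n = (m - j) * n" by (simp add: diff_mult_distrib)
    have "((+>) Q \<circ> (\<lambda>j. g (j * n))) j = Q +> (u (j * n) \<otimes> (\<alpha> ^^ (n * j)) (v ((m - j) * n)))"
    proof -
      have e2: "\<alpha> ^^ (j * n) = \<alpha> ^^ (n * j)" by (simp add: mult.commute)
      show ?thesis by (simp only: g_def e e2 o_apply)
    qed
    also have "\<dots> = (Q +> u (j * n)) \<otimes>\<^bsub>R Quot Q\<^esub> (Q +> (\<alpha> ^^ (n * j)) (v ((m - j) * n)))"
      using S_coeff[OF uc] S_coeff[OF vc] by (simp add: cos_mult)
    also have "Q +> (\<alpha> ^^ (n * j)) (v ((m - j) * n)) = (\<gamma> ^^ j) (\<pi> v (m - j))"
      unfolding \<pi>_def using gamma_pow_cos S_coeff[OF vc] by simp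
    finally show "((+>) Q \<circ> (\<lambda>j. g (j * n))) j = \<pi> u j \<otimes>\<^bsub>R Quot Q\<^esub> (\<gamma> ^^ j) (\<pi> v (m - j))"
      unfolding \<pi>_def .
  qed
  also have "\<dots> = (\<pi> u \<otimes>\<^bsub>T'\<^esub> \<pi> v) m" unfolding T'_mult ..
  finally show "\<pi> (u \<otimes>\<^bsub>S\<^esub> v) m = (\<pi> u \<otimes>\<^bsub>T'\<^esub> \<pi> v) m" .
qed

lemma lift_TT: assumes F: "F \<in> carrier T'" shows "lift F \<in> TT"
proof -
  have Fc: "F i \<in> carrier (R Quot Q)" for i using F T'_carrier by blast
  have finF: "finite {i. F i \<noteq> Q}" using F T'_carrier by blast
  have "{k. lift F k \<noteq> \<zero>} \<subseteq> (\<lambda>j. j * n) ` {i. F i \<noteq> Q}"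
  proof
    fix k assume "k \<in> {k. lift F k \<noteq> \<zero>}"
    then have k: "n dvd k" "rep (F (k div n)) \<noteq> \<zero>" unfolding lift_def by (auto split: if_splits)
    then have "F (k div n) \<noteq> Q" using rep_spec(3)[OF Fc] by blast
    moreover have "k = (k div n) * n" using k(1) by simp
    ultimately show "k \<in> (\<lambda>j. j * n) ` {i. F i \<noteq> Q}" by blast
  qed
  then have "finite {k. lift F k \<noteq> \<zero>}" using finite_subset finF by blast
  moreover have "lift F k \<in> carrier R" for k unfolding lift_def using rep_spec(1)[OF Fc] by simp
  ultimately have "lift F \<in> carrier S" by (simp add: S_carrier)
  then show ?thesis unfolding TT_def lift_def by simp
qed

lemma pi_lift: assumes F: "F \<in> carrier T'" shows "\<pi> (lift F) = F"
proof
  fix m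
  have Fc: "F m \<in> carrier (R Quot Q)" using F T'_carrier by blast
  have "\<pi> (lift F) m = Q +> rep (F m)" unfolding \<pi>_def lift_def using npos by simp
  then show "\<pi> (lift F) m = F m" using rep_spec(2)[OF Fc] by simp
qed

lemma pi_img: "\<pi> ` TT = carrier T'"
proof
  show "\<pi> ` TT \<subseteq> carrier T'" using pi_carrier TT_sub by blast
  show "carrier T' \<subseteq> \<pi> ` TT"
  proof
    fix F assume F: "F \<in> carrier T'"
    then have "F = \<pi> (lift F)" using pi_lift by simp
    then show "F \<in> \<pi> ` TT" using lift_TT[OF F] by blast
  qed
qed

lemma T'_ring: "ring T'"
proof (rule ring_transfer[where A=S and C=TT and B="T'" and \<pi>=\<pi>])
  show "ring S" by (rule Sring)
  show "TT \<subseteq> carrier S" by (rule TT_sub)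
  show "\<And>x y. x \<in> TT \<Longrightarrow> y \<in> TT \<Longrightarrow> x \<oplus>\<^bsub>S\<^esub> y \<in> TT" by (rule TT_add)
  show "\<And>x y. x \<in> TT \<Longrightarrow> y \<in> TT \<Longrightarrow> x \<otimes>\<^bsub>S\<^esub> y \<in> TT" by (rule TT_mult)
  show "\<And>x. x \<in> TT \<Longrightarrow> \<ominus>\<^bsub>S\<^esub> x \<in> TT" by (rule TT_neg)
  show "\<zero>\<^bsub>S\<^esub> \<in> TT" by (rule TT_zero)
  show "\<one>\<^bsub>S\<^esub> \<in> TT" by (rule TT_one)
  show "\<pi> ` TT = carrier T'" by (rule pi_img)
  show "\<And>x y. x \<in> TT \<Longrightarrow> y \<in> TT \<Longrightarrow> \<pi> (x \<oplus>\<^bsub>S\<^esub> y) = \<pi> x \<oplus>\<^bsub>T'\<^esub> \<pi> y"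
  proof -
    fix x y assume "x \<in> TT" "y \<in> TT"
    then have "x \<in> carrier S" "y \<in> carrier S" using TT_sub by blast+
    then show "\<pi> (x \<oplus>\<^bsub>S\<^esub> y) = \<pi> x \<oplus>\<^bsub>T'\<^esub> \<pi> y" by (rule pi_add)
  qed
  show "\<And>x y. x \<in> TT \<Longrightarrow> y \<in> TT \<Longrightarrow> \<pi> (x \<otimes>\<^bsub>S\<^esub> y) = \<pi> x \<otimes>\<^bsub>T'\<^esub> \<pi> y" by (rule pi_mult)
  show "\<pi> \<zero>\<^bsub>S\<^esub> = \<zero>\<^bsub>T'\<^esub>" by (rule pi_zero)
  show "\<pi> \<one>\<^bsub>S\<^esub> = \<one>\<^bsub>T'\<^esub>" by (rule pi_one)
qed

lemma pi_eq_Q: assumes u: "u \<in> TT" and v: "v \<in> TT" and e: "\<pi> u = \<pi> v"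
  shows "u k \<ominus> v k \<in> Q"
proof (cases "n dvd k")
  case True
  then obtain m where k: "k = m * n" by (metis dvd_def mult.commute)
  have "Q +> u (m * n) = Q +> v (m * n)" using fun_cong[OF e, of m] unfolding \<pi>_def .
  then show ?thesis unfolding k using cos_eq S_coeff u v TT_sub by blast
next
  case False
  then have "u k = \<zero>" "v k = \<zero>" using u v unfolding TT_def by blast+
  then show ?thesis using zQ by (simp add: a_minus_def)
qed

end

locale partBM = partB R \<alpha> n Q + rmod "skew_poly R \<alpha>" M madd mzero act
  for R :: "('a, 'b) ring_scheme" (structure) and \<alpha> n Q
    and M :: "'m set" and madd mzero act +
  assumes sm: "simple_right_module (skew_poly R \<alpha>) M madd mzero act"
    and fm: "faithful_right_module (skew_poly R \<alpha>) M madd mzero act"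
begin

definition KQ :: "'m \<Rightarrow> bool" where "KQ y \<longleftrightarrow> (\<forall>q\<in>Q. act y (cst q) = mzero)"

lemma mono_carrier: "(\<lambda>k. if k = d then \<one> else \<zero>) \<in> carrier S"
proof -
  have "{k. (if k = d then \<one> else \<zero>) \<noteq> \<zero>} \<subseteq> {d}" by auto
  then show ?thesis by (auto simp: S_carrier intro: finite_subset)
qed

lemma coeffQ_kill:
  assumes y: "y \<in> M" and K: "KQ y" and h: "h \<in> carrier S" and hQ: "\<And>k. h k \<in> Q"
  shows "act y h = mzero"
proof -
  have main: "\<forall>h. h \<in> carrier S \<longrightarrow> (\<forall>k. h k \<in> Q) \<longrightarrow> (\<forall>k\<ge>d. h k = \<zero>) \<longrightarrow> act y h = mzero" for d
  proof (induction d)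
    case 0
    show ?case
    proof (intro allI impI)
      fix h assume "h \<in> carrier S" "\<forall>k. h k \<in> Q" "\<forall>k\<ge>0. h k = \<zero>"
      then have "h = \<zero>\<^bsub>S\<^esub>" by (auto simp: S_zero)
      then show "act y h = mzero" using y by simp
    qed
  next
    case (Suc d)
    show ?case
    proof (intro allI impI)
      fix h assume hc: "h \<in> carrier S" and hQ: "\<forall>k. h k \<in> Q" and hb: "\<forall>k\<ge>Suc d. h k = \<zero>"
      define h' where "h' = (\<lambda>k. if k = d then \<zero> else h k)"
      define mono where "mono = (\<lambda>k. if k = d then \<one> else \<zero>)"
      have hdc: "h d \<in> carrier R" using S_coeff[OF hc] .
      have h'c: "h' \<in> carrier S"
      proof -
        have "{k. h' k \<noteq> \<zero>} \<subseteq> {k. h k \<noteq> \<zero>}" unfolding h'_def by auto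
        then show ?thesis using hc unfolding h'_def by (auto simp: S_carrier intro: finite_subset)
      qed
      have h'Q: "\<forall>k. h' k \<in> Q" unfolding h'_def using hQ zQ by auto
      have h'b: "\<forall>k\<ge>d. h' k = \<zero>" unfolding h'_def using hb by auto
      have monoc: "mono \<in> carrier S" unfolding mono_def by (rule mono_carrier)
      have cc: "cst (h d) \<in> carrier S" by (rule cst_carrier[OF hdc])
      have cm: "cst (h d) \<otimes>\<^bsub>S\<^esub> mono = (\<lambda>k. if k = d then h d else \<zero>)"
      proof
        fix k
        show "(cst (h d) \<otimes>\<^bsub>S\<^esub> mono) k = (if k = d then h d else \<zero>)"
          using cst_lmult[OF hdc, of mono k] hdc unfolding mono_def by simp
      qed
      have hsplit: "h = h' \<oplus>\<^bsub>S\<^esub> (cst (h d) \<otimes>\<^bsub>S\<^esub> mono)"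
      proof
        fix k show "h k = (h' \<oplus>\<^bsub>S\<^esub> (cst (h d) \<otimes>\<^bsub>S\<^esub> mono)) k"
          unfolding S_add cm h'_def using S_coeff[OF hc] by simp
      qed
      have "act y h = madd (act y h') (act y (cst (h d) \<otimes>\<^bsub>S\<^esub> mono))"
        using hsplit act_add_r[OF y h'c T.m_closed[OF cc monoc]] by simp
      also have "act y h' = mzero" using Suc.IH h'c h'Q h'b by blast
      also have "act y (cst (h d) \<otimes>\<^bsub>S\<^esub> mono) = act (act y (cst (h d))) mono"
        using act_mult[OF y cc monoc] .
      also have "act y (cst (h d)) = mzero" using K hQ unfolding KQ_def by blast
      finally show "act y h = mzero" using monoc by simp
    qed
  qed
  have fin: "finite {k. h k \<noteq> \<zero>}" using h by (simp add: S_carrier)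
  obtain d where "{k. h k \<noteq> \<zero>} \<subseteq> {..<d}"
    using finite_nat_bounded[OF fin] by blast
  then have "\<forall>k\<ge>d. h k = \<zero>" by auto
  then show ?thesis using main h hQ by blast
qed

lemma kill_eq:
  assumes y: "y \<in> M" and K: "KQ y" and a: "a \<in> carrier S" and b: "b \<in> carrier S"
    and d: "\<And>k. a k \<ominus> b k \<in> Q"
  shows "act y a = act y b"
proof -
  define dd where "dd = (\<lambda>k. a k \<ominus> b k)"
  have ddc: "dd \<in> carrier S"
  proof -
    have "{k. dd k \<noteq> \<zero>} \<subseteq> {k. a k \<noteq> \<zero>} \<union> {k. b k \<noteq> \<zero>}"
      unfolding dd_def using S_coeff[OF a] S_coeff[OF b] by auto
    moreover have "finite ({k. a k \<noteq> \<zero>} \<union> {k. b k \<noteq> \<zero>})" using a b by (simp add: S_carrier)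
    ultimately have "finite {k. dd k \<noteq> \<zero>}" by (rule finite_subset)
    then show ?thesis unfolding dd_def using S_coeff[OF a] S_coeff[OF b] by (simp add: S_carrier)
  qed
  have "a = b \<oplus>\<^bsub>S\<^esub> dd"
  proof
    fix k
    have "b k \<oplus> (a k \<ominus> b k) = a k" using S_coeff[OF a] S_coeff[OF b]
      by (simp add: a_minus_def) algebra
    then show "a k = (b \<oplus>\<^bsub>S\<^esub> dd) k" unfolding S_add dd_def by simp
  qed
  then have "act y a = madd (act y b) (act y dd)" using act_add_r[OF y b ddc] by simp
  also have "act y dd = mzero" using coeffQ_kill[OF y K ddc] d unfolding dd_def by blast
  finally show ?thesis using y b by simp
qed

lemma KQ_TT: assumes y: "y \<in> M" and K: "KQ y" and t: "t \<in> TT" shows "KQ (act y t)"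
  unfolding KQ_def
proof
  fix q assume q: "q \<in> Q"
  have qc: "q \<in> carrier R" using q Qc by blast
  have tc: "t \<in> carrier S" using t TT_sub by blast
  have "act (act y t) (cst q) = act y (t \<otimes>\<^bsub>S\<^esub> cst q)" using act_mult[OF y tc cst_carrier[OF qc]] by simp
  also have "\<dots> = mzero"
  proof (rule coeffQ_kill[OF y K T.m_closed[OF tc cst_carrier[OF qc]]])
    fix k
    have e: "(t \<otimes>\<^bsub>S\<^esub> cst q) k = t k \<otimes> (\<alpha> ^^ k) q" using cst_rmult[OF qc S_coeff[OF tc]] .
    show "(t \<otimes>\<^bsub>S\<^esub> cst q) k \<in> Q"
    proof (cases "n dvd k")
      case True
      show ?thesis unfolding e by (rule QI.I_l_closed[OF Qstab[OF q True] S_coeff[OF tc, of k]])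
    next
      case False
      then have "t k = \<zero>" using t unfolding TT_def by blast
      then show ?thesis unfolding e using zQ qc by simp
    qed
  qed
  finally show "act (act y t) (cst q) = mzero" .
qed

definition trunc :: "(nat \<Rightarrow> 'a) \<Rightarrow> nat \<Rightarrow> 'a" where
  "trunc s = (\<lambda>k. if n dvd k then s k else \<zero>)"

lemma trunc_carrier: assumes s: "s \<in> carrier S" shows "trunc s \<in> carrier S"
proof -
  have "{k. trunc s k \<noteq> \<zero>} \<subseteq> {k. s k \<noteq> \<zero>}" unfolding trunc_def by auto
  then show ?thesis using s unfolding trunc_def by (auto simp: S_carrier intro: finite_subset)
qed

lemma KL:
  assumes y: "y \<in> M" and K: "KQ y" and s: "s \<in> carrier S" and r: "r \<in> I0"
  shows "act y (s \<otimes>\<^bsub>S\<^esub> cst r) = act y (trunc s \<otimes>\<^bsub>S\<^esub> cst r)"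
    and "trunc s \<otimes>\<^bsub>S\<^esub> cst r \<in> TT"
proof -
  have rc: "r \<in> carrier R" using I0_carrier[OF r] .
  have tc: "trunc s \<in> carrier S" using trunc_carrier[OF s] .
  have c: "cst r \<in> carrier S" using cst_carrier[OF rc] .
  have e1: "(s \<otimes>\<^bsub>S\<^esub> cst r) k = s k \<otimes> (\<alpha> ^^ k) r" for k using cst_rmult[OF rc S_coeff[OF s]] .
  have e2: "(trunc s \<otimes>\<^bsub>S\<^esub> cst r) k = trunc s k \<otimes> (\<alpha> ^^ k) r" for k using cst_rmult[OF rc S_coeff[OF tc]] .
  show "act y (s \<otimes>\<^bsub>S\<^esub> cst r) = act y (trunc s \<otimes>\<^bsub>S\<^esub> cst r)"
  proof (rule kill_eq[OF y K T.m_closed[OF s c] T.m_closed[OF tc c]])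
    fix k
    show "(s \<otimes>\<^bsub>S\<^esub> cst r) k \<ominus> (trunc s \<otimes>\<^bsub>S\<^esub> cst r) k \<in> Q"
    proof (cases "n dvd k")
      case True
      have "s k \<otimes> (\<alpha> ^^ k) r \<ominus> s k \<otimes> (\<alpha> ^^ k) r = \<zero>" using S_coeff[OF s] rc by (simp add: a_minus_def r_neg)
      then show ?thesis unfolding e1 e2 using True zQ by (simp add: trunc_def)
    next
      case False
      have "s k \<otimes> (\<alpha> ^^ k) r \<in> Q" using QI.I_l_closed[OF I0_shift[OF r False] S_coeff[OF s]] .
      moreover have "s k \<otimes> (\<alpha> ^^ k) r \<ominus> \<zero> \<otimes> (\<alpha> ^^ k) r = s k \<otimes> (\<alpha> ^^ k) r"
        using S_coeff[OF s] rc by (simp add: a_minus_def)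
      ultimately show ?thesis unfolding e1 e2 using False by (simp add: trunc_def)
    qed
  qed
  have "(trunc s \<otimes>\<^bsub>S\<^esub> cst r) k = \<zero>" if "\<not> n dvd k" for k
    unfolding e2 using that rc by (simp add: trunc_def)
  then show "trunc s \<otimes>\<^bsub>S\<^esub> cst r \<in> TT" unfolding TT_def using T.m_closed[OF tc c] by simp
qed

lemma pi_eq_act:
  assumes y: "y \<in> M" and K: "KQ y" and u: "u \<in> TT" and v: "v \<in> TT" and e: "\<pi> u = \<pi> v"
  shows "act y u = act y v"
proof -
  have d: "\<And>k. u k \<ominus> v k \<in> Q" using pi_eq_Q[OF u v e] .
  have uc: "u \<in> carrier S" and vc: "v \<in> carrier S" using u v TT_sub by blast+
  show ?thesis by (rule kill_eq[OF y K uc vc d])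
qed

end

context partBM begin

lemma prim: "primitive T'"
proof -
  obtain r0 where r0: "r0 \<in> I0" "r0 \<notin> Q" using I0_exists by blast
  have r0c: "r0 \<in> carrier R" using I0_carrier[OF r0(1)] .
  have cr0: "cst r0 \<in> carrier S" using cst_carrier[OF r0c] .
  have "cst r0 \<noteq> \<zero>\<^bsub>S\<^esub>"
  proof
    assume "cst r0 = \<zero>\<^bsub>S\<^esub>"
    then have "cst r0 0 = \<zero>" by (simp add: S_zero)
    then have "r0 = \<zero>" by (simp add: cst_def)
    then show False using r0(2) zQ by simp
  qed
  then obtain m0 where m0: "m0 \<in> M" "act m0 (cst r0) \<noteq> mzero"
    using fm cr0 unfolding faithful_right_module_def by blast
  define x0 where "x0 = act m0 (cst r0)"
  have x0M: "x0 \<in> M" unfolding x0_def using m0 cr0 by simp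
  have x0nz: "x0 \<noteq> mzero" unfolding x0_def using m0 by simp
  have Kx0: "KQ x0" unfolding KQ_def
  proof
    fix q assume q: "q \<in> Q"
    have qc: "q \<in> carrier R" using q Qc by blast
    have "cst r0 \<otimes>\<^bsub>S\<^esub> cst q = \<zero>\<^bsub>S\<^esub>"
    proof
      fix k
      have "(cst r0 \<otimes>\<^bsub>S\<^esub> cst q) k = r0 \<otimes> cst q k"
        using cst_lmult[OF r0c] cst_carrier[OF qc] S_coeff by blast
      also have "\<dots> = \<zero>" using I0_Q[OF r0(1) q] r0c by (simp add: cst_def)
      finally show "(cst r0 \<otimes>\<^bsub>S\<^esub> cst q) k = \<zero>\<^bsub>S\<^esub> k" by (simp add: S_zero)
    qed
    then show "act x0 (cst q) = mzero"
      unfolding x0_def using act_mult[OF m0(1) cr0 cst_carrier[OF qc]] m0(1) by simp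
  qed
  define N where "N = {act x0 t | t. t \<in> TT}"
  have NM: "N \<subseteq> M" unfolding N_def using x0M TT_sub by auto
  have NK: "KQ y" if "y \<in> N" for y using that KQ_TT[OF x0M Kx0] unfolding N_def by blast
  have Nact: "act y t \<in> N" if y: "y \<in> N" and t: "t \<in> TT" for y t
  proof -
    obtain t' where t': "t' \<in> TT" "y = act x0 t'" using y unfolding N_def by blast
    have c: "t' \<in> carrier S" "t \<in> carrier S" using t'(1) t TT_sub by blast+
    have "act y t = act x0 (t' \<otimes>\<^bsub>S\<^esub> t)" using act_mult[OF x0M c] t'(2) by simp
    then show ?thesis using TT_mult[OF t'(1) t] unfolding N_def by blast
  qed
  have x0N: "x0 \<in> N" using x0M TT_one unfolding N_def by (intro CollectI exI[of _ "\<one>\<^bsub>S\<^esub>"]) simp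
  define act' where "act' y F = act y (lift F)" for y F
  have liftc: "lift F \<in> carrier S" if "F \<in> carrier T'" for F using lift_TT[OF that] TT_sub by blast
  interpret T'r: ring T' by (rule T'_ring)
  have sg: "subgroup N G"
  proof
    show "N \<subseteq> carrier G" using NM by simp
    have "mzero = act x0 \<zero>\<^bsub>S\<^esub>" using x0M by simp
    then show "\<one>\<^bsub>G\<^esub> \<in> N" using TT_zero unfolding N_def by auto
  next
    fix a b assume "a \<in> N" "b \<in> N"
    then obtain s t where st: "s \<in> TT" "t \<in> TT" "a = act x0 s" "b = act x0 t" unfolding N_def by blast
    have c: "s \<in> carrier S" "t \<in> carrier S" using st(1,2) TT_sub by blast+
    have "madd a b = act x0 (s \<oplus>\<^bsub>S\<^esub> t)" using act_add_r[OF x0M c] st(3,4) by simp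
    then show "a \<otimes>\<^bsub>G\<^esub> b \<in> N" using TT_add[OF st(1,2)] unfolding N_def by auto
  next
    fix a assume "a \<in> N"
    then obtain s where s: "s \<in> TT" "a = act x0 s" unfolding N_def by blast
    have c: "s \<in> carrier S" using s(1) TT_sub by blast
    have "inv\<^bsub>G\<^esub> a = act x0 (\<ominus>\<^bsub>S\<^esub> s)" using act_neg[OF x0M c] s(2) by simp
    then show "inv\<^bsub>G\<^esub> a \<in> N" using TT_neg[OF s(1)] unfolding N_def by auto
  qed
  have cgN: "comm_group \<lparr>carrier = N, mult = madd, one = mzero\<rparr>"
  proof -
    have "group (G\<lparr>carrier := N\<rparr>)" by (rule subgroup.subgroup_is_group[OF sg G.is_group])
    then have gN: "group \<lparr>carrier = N, mult = madd, one = mzero\<rparr>" by simp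
    show ?thesis
    proof (rule group.group_comm_groupI[OF gN])
      fix x y assume "x \<in> carrier \<lparr>carrier = N, mult = madd, one = mzero\<rparr>" "y \<in> carrier \<lparr>carrier = N, mult = madd, one = mzero\<rparr>"
      then show "x \<otimes>\<^bsub>\<lparr>carrier = N, mult = madd, one = mzero\<rparr>\<^esub> y = y \<otimes>\<^bsub>\<lparr>carrier = N, mult = madd, one = mzero\<rparr>\<^esub> x"
        using NM madd_comm by auto
    qed
  qed
  have lift_pi: "act y (lift (\<pi> w)) = act y w" if y: "y \<in> N" and w: "w \<in> TT" for y w
  proof (rule pi_eq_act)
    show "y \<in> M" using y NM by blast
    show "KQ y" using NK[OF y] .
    show "lift (\<pi> w) \<in> TT" using lift_TT pi_carrier w TT_sub by blast
    show "w \<in> TT" by (rule w)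
    show "\<pi> (lift (\<pi> w)) = \<pi> w" using pi_lift pi_carrier w TT_sub by blast
  qed
  have rmN: "right_module T' N madd mzero act'"
    unfolding right_module_def
  proof (intro conjI ballI)
    show "ring T'" by (rule T'_ring)
    show "comm_group \<lparr>carrier = N, mult = madd, one = mzero\<rparr>" by (rule cgN)
  next
    fix m r assume "m \<in> N" "r \<in> carrier T'"
    then show "act' m r \<in> N" unfolding act'_def using Nact lift_TT by blast
  next
    fix m r s assume m: "m \<in> N" and r: "r \<in> carrier T'" and s: "s \<in> carrier T'"
    have mM: "m \<in> M" using m NM by blast
    have "act m (lift (r \<oplus>\<^bsub>T'\<^esub> s)) = act m (lift r \<oplus>\<^bsub>S\<^esub> lift s)"
    proof (rule pi_eq_act[OF mM NK[OF m]])
      show "lift (r \<oplus>\<^bsub>T'\<^esub> s) \<in> TT" using lift_TT T'r.a_closed[OF r s] by blast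
      show "lift r \<oplus>\<^bsub>S\<^esub> lift s \<in> TT" using TT_add lift_TT r s by blast
      show "\<pi> (lift (r \<oplus>\<^bsub>T'\<^esub> s)) = \<pi> (lift r \<oplus>\<^bsub>S\<^esub> lift s)"
        using pi_lift[OF T'r.a_closed[OF r s]] pi_add[OF liftc[OF r] liftc[OF s]] pi_lift[OF r] pi_lift[OF s] by simp
    qed
    also have "\<dots> = madd (act m (lift r)) (act m (lift s))" using act_add_r[OF mM liftc[OF r] liftc[OF s]] .
    finally show "act' m (r \<oplus>\<^bsub>T'\<^esub> s) = madd (act' m r) (act' m s)" unfolding act'_def .
  next
    fix m m' r assume a: "m \<in> N" "m' \<in> N" "r \<in> carrier T'"
    have "m \<in> M" "m' \<in> M" using a NM by blast+
    then show "act' (madd m m') r = madd (act' m r) (act' m' r)"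
      unfolding act'_def by (rule act_add_l[OF _ _ liftc[OF a(3)]])
  next
    fix m r s assume m: "m \<in> N" and r: "r \<in> carrier T'" and s: "s \<in> carrier T'"
    have mM: "m \<in> M" using m NM by blast
    have "act m (lift (r \<otimes>\<^bsub>T'\<^esub> s)) = act m (lift r \<otimes>\<^bsub>S\<^esub> lift s)"
    proof (rule pi_eq_act[OF mM NK[OF m]])
      show "lift (r \<otimes>\<^bsub>T'\<^esub> s) \<in> TT" using lift_TT T'r.m_closed[OF r s] by blast
      show "lift r \<otimes>\<^bsub>S\<^esub> lift s \<in> TT" using TT_mult lift_TT r s by blast
      show "\<pi> (lift (r \<otimes>\<^bsub>T'\<^esub> s)) = \<pi> (lift r \<otimes>\<^bsub>S\<^esub> lift s)"
        using pi_lift[OF T'r.m_closed[OF r s]] pi_mult[OF lift_TT[OF r] lift_TT[OF s]] pi_lift[OF r] pi_lift[OF s] by simp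
    qed
    also have "\<dots> = act (act m (lift r)) (lift s)" using act_mult[OF mM liftc[OF r] liftc[OF s]] .
    finally show "act' m (r \<otimes>\<^bsub>T'\<^esub> s) = act' (act' m r) s" unfolding act'_def .
  next
    fix m assume m: "m \<in> N"
    have mM: "m \<in> M" using m NM by blast
    have "act m (lift \<one>\<^bsub>T'\<^esub>) = act m \<one>\<^bsub>S\<^esub>"
    proof (rule pi_eq_act[OF mM NK[OF m]])
      show "lift \<one>\<^bsub>T'\<^esub> \<in> TT" using lift_TT T'r.one_closed by blast
      show "\<one>\<^bsub>S\<^esub> \<in> TT" by (rule TT_one)
      show "\<pi> (lift \<one>\<^bsub>T'\<^esub>) = \<pi> \<one>\<^bsub>S\<^esub>" using pi_lift[OF T'r.one_closed] pi_one by simp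
    qed
    then show "act' m \<one>\<^bsub>T'\<^esub> = m" unfolding act'_def using mM by simp
  qed
  have simpleN: "simple_right_module T' N madd mzero act'"
    unfolding simple_right_module_def
  proof (intro conjI allI impI)
    show "right_module T' N madd mzero act'" by (rule rmN)
    show "N \<noteq> {mzero}" using x0N x0nz by blast
  next
    fix N'' assume sub: "submodule T' N'' N madd mzero act'"
    have sg'': "subgroup N'' \<lparr>carrier = N, mult = madd, one = mzero\<rparr>" using sub unfolding submodule_def by blast
    have N''N: "N'' \<subseteq> N" using subgroup.subset[OF sg''] by simp
    have z'': "mzero \<in> N''" using subgroup.one_closed[OF sg''] by simp
    have act'': "act' m r \<in> N''" if "m \<in> N''" "r \<in> carrier T'" for m r
      using sub that unfolding submodule_def by blast
    show "N'' = {mzero} \<or> N'' = N"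
    proof (cases "N'' = {mzero}")
      case True then show ?thesis by blast
    next
      case False
      then obtain x where x: "x \<in> N''" "x \<noteq> mzero" using z'' by blast
      have xN: "x \<in> N" using x N''N by blast
      have xM: "x \<in> M" using xN NM by blast
      have "N \<subseteq> N''"
      proof
        fix y assume "y \<in> N"
        then obtain t where t: "t \<in> TT" "y = act x0 t" unfolding N_def by blast
        have tc: "t \<in> carrier S" using t TT_sub by blast
        obtain s where s: "s \<in> carrier S" "m0 = act x s" using simple_cyclic[OF sm xM x(2) m0(1)] by blast
        have "x0 = act x (s \<otimes>\<^bsub>S\<^esub> cst r0)" unfolding x0_def s(2) using act_mult[OF xM s(1) cr0] by simp
        also have "\<dots> = act x (trunc s \<otimes>\<^bsub>S\<^esub> cst r0)" using KL(1)[OF xM NK[OF xN] s(1) r0(1)] .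
        finally have x0e: "x0 = act x (trunc s \<otimes>\<^bsub>S\<^esub> cst r0)" .
        define w where "w = (trunc s \<otimes>\<^bsub>S\<^esub> cst r0) \<otimes>\<^bsub>S\<^esub> t"
        have wT: "w \<in> TT" unfolding w_def using TT_mult[OF KL(2)[OF xM NK[OF xN] s(1) r0(1)] t(1)] .
        have "y = act x w"
          unfolding t(2) x0e w_def using act_mult[OF xM _ tc] trunc_carrier[OF s(1)] cr0 by (simp add: T.m_closed)
        also have "\<dots> = act x (lift (\<pi> w))" using lift_pi[OF xN wT] by simp
        also have "\<dots> = act' x (\<pi> w)" unfolding act'_def ..
        finally have "y = act' x (\<pi> w)" .
        moreover have "\<pi> w \<in> carrier T'" using pi_carrier wT TT_sub by blast
        ultimately show "y \<in> N''" using act''[OF x(1)] by blast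
      qed
      then show ?thesis using N''N by blast
    qed
  qed
  have faithN: "faithful_right_module T' N madd mzero act'"
    unfolding faithful_right_module_def
  proof (intro conjI ballI impI)
    show "right_module T' N madd mzero act'" by (rule rmN)
    fix F assume F: "F \<in> carrier T'" and z: "\<forall>m\<in>N. act' m F = mzero"
    define t where "t = lift F"
    have tT: "t \<in> TT" unfolding t_def using lift_TT[OF F] .
    have tc: "t \<in> carrier S" using tT TT_sub by blast
    have "act m (cst r0 \<otimes>\<^bsub>S\<^esub> t) = mzero" if m: "m \<in> M" for m
    proof (cases "m = mzero")
      case True then show ?thesis using T.m_closed[OF cr0 tc] by simp
    next
      case False
      obtain s where s: "s \<in> carrier S" "m = act x0 s" using simple_cyclic[OF sm x0M x0nz m] by blast
      have "act m (cst r0 \<otimes>\<^bsub>S\<^esub> t) = act (act x0 (s \<otimes>\<^bsub>S\<^esub> cst r0)) t"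
        unfolding s(2) using act_mult[OF x0M s(1) T.m_closed[OF cr0 tc]] act_mult[OF x0M T.m_closed[OF s(1) cr0] tc]
          T.m_assoc[OF s(1) cr0 tc] by simp
      also have "act x0 (s \<otimes>\<^bsub>S\<^esub> cst r0) = act x0 (trunc s \<otimes>\<^bsub>S\<^esub> cst r0)"
        using KL(1)[OF x0M Kx0 s(1) r0(1)] .
      also have "act (act x0 (trunc s \<otimes>\<^bsub>S\<^esub> cst r0)) t = act' (act x0 (trunc s \<otimes>\<^bsub>S\<^esub> cst r0)) F"
        unfolding act'_def t_def ..
      also have "\<dots> = mzero"
        using z KL(2)[OF x0M Kx0 s(1) r0(1)] unfolding N_def by blast
      finally show ?thesis .
    qed
    then have "cst r0 \<otimes>\<^bsub>S\<^esub> t = \<zero>\<^bsub>S\<^esub>"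
      using fm T.m_closed[OF cr0 tc] unfolding faithful_right_module_def by blast
    then have tQ: "t k \<in> Q" for k
    proof -
      assume e: "cst r0 \<otimes>\<^bsub>S\<^esub> t = \<zero>\<^bsub>S\<^esub>"
      have "r0 \<otimes> t k = (cst r0 \<otimes>\<^bsub>S\<^esub> t) k" using cst_lmult[OF r0c S_coeff[OF tc]] by simp
      also have "\<dots> = \<zero>" using e by (simp add: S_zero)
      finally have "r0 \<otimes> t k \<in> Q" using zQ by simp
      then show "t k \<in> Q" using primeideal.I_prime[OF Qp r0c S_coeff[OF tc]] r0(2) by blast
    qed
    have "F = \<pi> t" unfolding t_def using pi_lift[OF F] by simp
    also have "\<dots> = (\<lambda>m. Q)" unfolding \<pi>_def by (rule ext) (simp add: cos_eq_Q[OF S_coeff[OF tc]] tQ)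
    also have "\<dots> = \<zero>\<^bsub>T'\<^esub>" using T'_zero by simp
    finally show "F = \<zero>\<^bsub>T'\<^esub>" .
  qed
  show ?thesis by (rule primitive_transport[OF simpleN faithN])
qed

end

theorem lemma4p5:
  fixes R :: "('a, 'b) ring_scheme" and \<alpha> :: "'a \<Rightarrow> 'a"
  assumes "cring R"
    and "noetherian_ring R"
    and "\<alpha> \<in> ring_iso R R"
    and "prime_ring (skew_poly R \<alpha>)"
  shows "alpha_prime_ring R \<alpha> \<and>
         (\<exists>(n::nat) Q. 0 < n \<and> primeideal Q R \<and>
            inj_on (\<lambda>i. (\<alpha> ^^ i) ` Q) {..<n} \<and>
            {P. minimal_prime R P} = (\<lambda>i. (\<alpha> ^^ i) ` Q) ` {..<n} \<and>
            (\<alpha> ^^ n) ` Q = Q \<and>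
            (\<Inter>i\<in>{..<n}. (\<alpha> ^^ i) ` Q) = {\<zero>\<^bsub>R\<^esub>}) \<and>
         (\<forall>(n::nat) Q. (0 < n \<and> primeideal Q R \<and>
            inj_on (\<lambda>i. (\<alpha> ^^ i) ` Q) {..<n} \<and>
            {P. minimal_prime R P} = (\<lambda>i. (\<alpha> ^^ i) ` Q) ` {..<n} \<and>
            (\<alpha> ^^ n) ` Q = Q \<and>
            (\<Inter>i\<in>{..<n}. (\<alpha> ^^ i) ` Q) = {\<zero>\<^bsub>R\<^esub>}) \<longrightarrow>
          primitive (skew_poly R \<alpha>) \<longrightarrow>
          primitive (skew_poly (R Quot Q) (\<lambda>X. (\<alpha> ^^ n) ` X)))"
proof -
  have Sr: "ring (skew_poly R \<alpha>)" using assms(4) unfolding prime_ring_def by blast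
  have sk: "skewctx R \<alpha>" by (rule skewctx.intro[OF assms(1) skewctx_axioms.intro[OF assms(3) Sr]])
  have A: "alpha_prime_ring R \<alpha> \<and>
         (\<exists>(n::nat) Q. 0 < n \<and> primeideal Q R \<and>
            inj_on (\<lambda>i. (\<alpha> ^^ i) ` Q) {..<n} \<and>
            {P. minimal_prime R P} = (\<lambda>i. (\<alpha> ^^ i) ` Q) ` {..<n} \<and>
            (\<alpha> ^^ n) ` Q = Q \<and>
            (\<Inter>i\<in>{..<n}. (\<alpha> ^^ i) ` Q) = {\<zero>\<^bsub>R\<^esub>})"
    by (rule skewctx.partA[OF sk assms(2) assms(4)])
  have B: "primitive (skew_poly (R Quot Q) (\<lambda>X. (\<alpha> ^^ n) ` X))"
    if h: "0 < n \<and> primeideal Q R \<and>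
            inj_on (\<lambda>i. (\<alpha> ^^ i) ` Q) {..<n} \<and>
            {P. minimal_prime R P} = (\<lambda>i. (\<alpha> ^^ i) ` Q) ` {..<n} \<and>
            (\<alpha> ^^ n) ` Q = Q \<and>
            (\<Inter>i\<in>{..<n}. (\<alpha> ^^ i) ` Q) = {\<zero>\<^bsub>R\<^esub>}"
    and p: "primitive (skew_poly R \<alpha>)" for n Q
  proof -
    have pb: "partB R \<alpha> n Q"
      by (rule partB.intro[OF sk partB_axioms.intro]) (use h in blast)+
    obtain M :: "(nat \<Rightarrow> 'a) set set" and madd mzero act where
      sm: "simple_right_module (skew_poly R \<alpha>) M madd mzero act" and
      fm: "faithful_right_module (skew_poly R \<alpha>) M madd mzero act"
      using p unfolding primitive_def by blast
    have rmd: "right_module (skew_poly R \<alpha>) M madd mzero act"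
      using sm unfolding simple_right_module_def by blast
    have pbm: "partBM R \<alpha> n Q M madd mzero act"
      by (rule partBM.intro[OF pb rmod.intro[OF rmd] partBM_axioms.intro[OF sm fm]])
    interpret PB: partBM R \<alpha> n Q M madd mzero act by (rule pbm)
    have g: "PB.\<gamma> = (\<lambda>X. (\<alpha> ^^ n) ` X)" by (rule ext) (simp add: PB.\<gamma>_def)
    show ?thesis using PB.prim unfolding g .
  qed
  show ?thesis using A B by blast
qed


end
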